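(* Let $X,X_1,X_2,\dots$ be i.i.d. positive random variables with $\mathbb{E}X=1$, let $p\ge2$ be an integer, and suppose $\mathbb{E}X^{p+2}<\infty$. Put $S_r=X_1+\dots+X_r$, $M_n=\max_{1\le i\le n}X_i$, $T_n=\frac{X_1^2+\dots+X_n^2}{X_1+\dots+X_n}$ and $R_n^{(p)}=\frac{T_n^pM_n^2}{X_1+\dots+X_n}$. For $1\le r\le p$ let $C(p,r)$ be the set of tuples $\gamma=(\gamma_1,\dots,\gamma_r)$ of positive integers with $\gamma_1+\dots+\gamma_r=p$. Then there is a constant $c>0$ not depending on $n$ such that for all $n\ge 2p$, $$c\,\mathbb{E}R_n^{(p)}\le e^{-cn}+\max_{1\le r\le p}\max_{1\le k\le r}\max_{\gamma\in C(p,r)}\frac{1}{n^{p-r+1}}\mathbb{E}\frac{X_1^{2\gamma_1}\cdots X_r^{2\gamma_r}}{\left(\frac1nS_r+1\right)^{p+1}}X_k^2+\max_{1\le r\le p}\max_{\gamma\in C(p,r)}\frac{1}{n^{p-r+1}}\mathbb{E}\frac{X_1^{2\gamma_1}\cdots X_r^{2\gamma_r}}{\left(\frac1nS_r+1\right)^{p+1}}\cdot\mathbb{E}M_n^2.$$ *)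

theory Defs
  imports "HOL-Probability.Probability"
begin

definition compositions :: "nat \<Rightarrow> nat \<Rightarrow> nat list set" where
  "compositions p r = {\<gamma>. length \<gamma> = r \<and> (\<forall>g\<in>set \<gamma>. 0 < g) \<and> sum_list \<gamma> = p}"

definition psum :: "(nat \<Rightarrow> 'a \<Rightarrow> real) \<Rightarrow> nat \<Rightarrow> 'a \<Rightarrow> real" where
  "psum X r \<omega> = (\<Sum>i=1..r. X i \<omega>)"

definition maxX :: "(nat \<Rightarrow> 'a \<Rightarrow> real) \<Rightarrow> nat \<Rightarrow> 'a \<Rightarrow> real" where
  "maxX X n \<omega> = Max ((\<lambda>i. X i \<omega>) ` {1..n})"

definition Tstat :: "(nat \<Rightarrow> 'a \<Rightarrow> real) \<Rightarrow> nat \<Rightarrow> 'a \<Rightarrow> real" where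
  "Tstat X n \<omega> = (\<Sum>i=1..n. (X i \<omega>)^2) / psum X n \<omega>"

definition Rstat :: "nat \<Rightarrow> (nat \<Rightarrow> 'a \<Rightarrow> real) \<Rightarrow> nat \<Rightarrow> 'a \<Rightarrow> real" where
  "Rstat p X n \<omega> = (Tstat X n \<omega>)^p * (maxX X n \<omega>)^2 / psum X n \<omega>"

definition Wterm :: "nat \<Rightarrow> (nat \<Rightarrow> 'a \<Rightarrow> real) \<Rightarrow> nat \<Rightarrow> nat list \<Rightarrow> 'a \<Rightarrow> real" where
  "Wterm p X n \<gamma> \<omega> =
     (\<Prod>j<length \<gamma>. (X (Suc j) \<omega>) ^ (2 * \<gamma> ! j)) / (psum X (length \<gamma>) \<omega> / real n + 1) ^ (p + 1)"

end

theory Submission imports Defs begin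

definition uu :: "nat \<Rightarrow> real \<Rightarrow> real" where
  "uu n y = y^2 / (1 + y / real n)"

lemma uu_meas[measurable]: "uu n \<in> borel_measurable borel"
  unfolding uu_def by measurable

lemma uu_nonneg: "0 \<le> y \<Longrightarrow> 0 \<le> uu n y"
  unfolding uu_def by simp

lemma uu_le_sq: assumes "0 \<le> y" shows "uu n y \<le> y^2"
proof -
  have "1 \<le> 1 + y / real n" using assms by simp
  then show ?thesis unfolding uu_def
    using divide_left_mono[of 1 "1 + y / real n" "y^2"] by simp
qed

lemma uu_le_lin: assumes "0 \<le> y" "0 < n" shows "uu n y \<le> real n * y"
proof -
  have pos: "0 < 1 + y / real n" using assms by (simp add: add_pos_nonneg)
  have "y^2 \<le> real n * y * (1 + y / real n)"
    using assms by (simp add: algebra_simps power2_eq_square)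
  then show ?thesis unfolding uu_def using pos by (simp add: divide_le_eq)
qed

lemma uu_pow: assumes "0 \<le> y" "0 < n" "1 \<le> k" shows "uu n y ^ k \<le> real n ^ (k - 1) * y ^ (k + 1)"
proof -
  obtain j where k: "k = Suc j" using assms(3) by (cases k) auto
  have "uu n y ^ k = uu n y * uu n y ^ j" by (simp add: k)
  also have "\<dots> \<le> y^2 * (real n * y) ^ j"
    by (intro mult_mono power_mono uu_le_sq uu_le_lin uu_nonneg assms zero_le_power)
  also have "\<dots> = real n ^ (k - 1) * y ^ (k + 1)"
    by (simp add: k power_mult_distrib power2_eq_square algebra_simps power_add)
  finally show ?thesis .
qed

lemma uu_pow2: assumes "0 \<le> y" shows "uu n y ^ 2 \<le> y ^ 4"
proof -
  have "uu n y ^ 2 \<le> (y^2)^2" by (intro power_mono uu_le_sq uu_nonneg assms)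
  then show ?thesis by simp
qed

lemma pow_add_le: fixes a b :: real assumes "0 \<le> a" "0 \<le> b" shows "(a + b) ^ q \<le> 2 ^ q * (a ^ q + b ^ q)"
proof -
  have "(a + b) ^ q \<le> (2 * max a b) ^ q" by (intro power_mono) (use assms in auto)
  also have "\<dots> = 2 ^ q * (max a b) ^ q" by (simp add: power_mult_distrib)
  also have "(max a b) ^ q \<le> a ^ q + b ^ q" using assms by (cases "a \<le> b") (auto simp: max_def)
  then have "2 ^ q * (max a b) ^ q \<le> 2 ^ q * (a ^ q + b ^ q)" by simp
  finally show ?thesis .
qed

lemma sum_pow_le:
  fixes x :: "nat \<Rightarrow> real"
  assumes "finite J" "J \<noteq> {}" "\<And>i. i \<in> J \<Longrightarrow> 0 \<le> x i"
  shows "(\<Sum>i\<in>J. x i) ^ j \<le> real (card J) ^ j * (\<Sum>i\<in>J. x i ^ j)"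
proof -
  define m where "m = Max (x ` J)"
  have mJ: "m \<in> x ` J" unfolding m_def using assms by auto
  have le: "\<And>i. i \<in> J \<Longrightarrow> x i \<le> m" unfolding m_def using assms by auto
  have m0: "0 \<le> m" using mJ assms by auto
  have "(\<Sum>i\<in>J. x i) \<le> real (card J) * m" using sum_bounded_above[of J x m] le by auto
  then have "(\<Sum>i\<in>J. x i) ^ j \<le> (real (card J) * m) ^ j"
    by (intro power_mono) (use assms in \<open>auto intro: sum_nonneg\<close>)
  also have "\<dots> = real (card J) ^ j * m ^ j" by (simp add: power_mult_distrib)
  also have "m ^ j \<le> (\<Sum>i\<in>J. x i ^ j)"
    using mJ assms by (auto intro!: member_le_sum)
  then have "real (card J) ^ j * m ^ j \<le> real (card J) ^ j * (\<Sum>i\<in>J. x i ^ j)"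
    by (intro mult_left_mono) auto
  finally show ?thesis .
qed

primrec Kc :: "real \<Rightarrow> nat \<Rightarrow> real" where
  "Kc m 0 = 1"
| "Kc m (Suc q) = 2 ^ q * m * (1 + Kc m q)"

lemma Kc_nonneg: "0 \<le> m \<Longrightarrow> 0 \<le> Kc m q"
  by (induction q) auto

lemma Kc_pos: "0 < m \<Longrightarrow> 0 < Kc m q"
  by (induction q) (auto intro!: mult_pos_pos add_pos_pos)

lemma exp_neg_le: fixes y :: real assumes "0 \<le> y" shows "exp (- y) \<le> 1 - y + y^2 / 2"
proof -
  define h where "h = (\<lambda>y::real. 1 - y + y^2 / 2 - exp (- y))"
  have "h 0 \<le> h y"
  proof (rule DERIV_nonneg_imp_nondecreasing[OF assms])
    fix x :: real assume "0 \<le> x" "x \<le> y"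
    have "DERIV h x :> (- 1 + x + exp (- x))" unfolding h_def
      by (auto intro!: derivative_eq_intros simp: power2_eq_square)
    moreover have "0 \<le> - 1 + x + exp (- x)" using exp_ge_add_one_self[of "- x"] by simp
    ultimately show "\<exists>d. DERIV h x :> d \<and> 0 \<le> d" by blast
  qed
  then show ?thesis unfolding h_def by simp
qed

lemma pow_le_exp: fixes x a :: real assumes "0 < a" "0 \<le> x"
  shows "x ^ q \<le> (real q / a) ^ q * exp (a * x)"
proof (cases "q = 0")
  case True then show ?thesis using assms by (simp add: mult_nonneg_nonneg less_imp_le)
next
  case False
  have "a * x / real q \<le> exp (a * x / real q)"
    using exp_ge_add_one_self[of "a * x / real q"] by linarith
  then have "(a * x / real q) ^ q \<le> exp (a * x / real q) ^ q"
    using assms False by (intro power_mono) auto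
  also have "\<dots> = exp (a * x)" using False by (simp add: exp_of_nat_mult[symmetric])
  finally have *: "(a * x / real q) ^ q \<le> exp (a * x)" .
  have "real q / a * (a * x / real q) = x" using assms False by simp
  then have "x ^ q = (real q / a) ^ q * (a * x / real q) ^ q"
    by (metis power_mult_distrib)
  also have "\<dots> \<le> (real q / a) ^ q * exp (a * x)"
    using * assms by (intro mult_left_mono) auto
  finally show ?thesis .
qed

lemma finite_setA:
  fixes F :: "nat \<Rightarrow> nat \<Rightarrow> nat list \<Rightarrow> real"
  shows "finite {F r k \<gamma> | r k \<gamma>. 1 \<le> r \<and> r \<le> p \<and> 1 \<le> k \<and> k \<le> r \<and> \<gamma> \<in> compositions p r}"
proof (rule finite_subset)
  show "finite ((\<lambda>(r, k, \<gamma>). F r k \<gamma>) ` ({..p} \<times> {..p} \<times> {\<gamma>. set \<gamma> \<subseteq> {..p} \<and> length \<gamma> \<le> p}))"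
    by (intro finite_imageI finite_cartesian_product finite_lists_length_le) auto
  show "{F r k \<gamma> | r k \<gamma>. 1 \<le> r \<and> r \<le> p \<and> 1 \<le> k \<and> k \<le> r \<and> \<gamma> \<in> compositions p r}
    \<subseteq> (\<lambda>(r, k, \<gamma>). F r k \<gamma>) ` ({..p} \<times> {..p} \<times> {\<gamma>. set \<gamma> \<subseteq> {..p} \<and> length \<gamma> \<le> p})"
  proof
    fix x assume "x \<in> {F r k \<gamma> | r k \<gamma>. 1 \<le> r \<and> r \<le> p \<and> 1 \<le> k \<and> k \<le> r \<and> \<gamma> \<in> compositions p r}"
    then obtain r k \<gamma> where h: "x = F r k \<gamma>" "1 \<le> r" "r \<le> p" "1 \<le> k" "k \<le> r" "\<gamma> \<in> compositions p r" by blast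
    have "set \<gamma> \<subseteq> {..p}" using h(6) member_le_sum_list[of _ \<gamma>] unfolding compositions_def by fastforce
    moreover have "length \<gamma> \<le> p" using h(3,6) unfolding compositions_def by simp
    ultimately show "x \<in> (\<lambda>(r, k, \<gamma>). F r k \<gamma>) ` ({..p} \<times> {..p} \<times> {\<gamma>. set \<gamma> \<subseteq> {..p} \<and> length \<gamma> \<le> p})"
      using h by (intro image_eqI[of _ _ "(r, k, \<gamma>)"]) auto
  qed
qed

lemma finite_setB:
  fixes F :: "nat \<Rightarrow> nat list \<Rightarrow> real"
  shows "finite {F r \<gamma> | r \<gamma>. 1 \<le> r \<and> r \<le> p \<and> \<gamma> \<in> compositions p r}"
proof (rule finite_subset)
  show "finite ((\<lambda>(r, \<gamma>). F r \<gamma>) ` ({..p} \<times> {\<gamma>. set \<gamma> \<subseteq> {..p} \<and> length \<gamma> \<le> p}))"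
    by (intro finite_imageI finite_cartesian_product finite_lists_length_le) auto
  show "{F r \<gamma> | r \<gamma>. 1 \<le> r \<and> r \<le> p \<and> \<gamma> \<in> compositions p r}
    \<subseteq> (\<lambda>(r, \<gamma>). F r \<gamma>) ` ({..p} \<times> {\<gamma>. set \<gamma> \<subseteq> {..p} \<and> length \<gamma> \<le> p})"
  proof
    fix x assume "x \<in> {F r \<gamma> | r \<gamma>. 1 \<le> r \<and> r \<le> p \<and> \<gamma> \<in> compositions p r}"
    then obtain r \<gamma> where h: "x = F r \<gamma>" "1 \<le> r" "r \<le> p" "\<gamma> \<in> compositions p r" by blast
    have "set \<gamma> \<subseteq> {..p}" using h(4) member_le_sum_list[of _ \<gamma>] unfolding compositions_def by fastforce
    moreover have "length \<gamma> \<le> p" using h(3,4) unfolding compositions_def by simp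
    ultimately show "x \<in> (\<lambda>(r, \<gamma>). F r \<gamma>) ` ({..p} \<times> {\<gamma>. set \<gamma> \<subseteq> {..p} \<and> length \<gamma> \<le> p})"
      using h by (intro image_eqI[of _ _ "(r, \<gamma>)"]) auto
  qed
qed

lemma Wterm_p: "0 < n \<Longrightarrow> Wterm p X n [p] \<omega> * X 1 \<omega> ^ 2 = uu n (X 1 \<omega>) ^ (p + 1)"
  unfolding Wterm_def uu_def psum_def
  by (simp add: power_divide power_mult[symmetric] power_add[symmetric] add.commute mult.commute)

lemma Wterm_g1: "Wterm p X n (replicate p 1) \<omega> = (\<Prod>j<p. X (Suc j) \<omega> ^ 2) / (psum X p \<omega> / real n + 1) ^ (p + 1)"
  unfolding Wterm_def by (simp add: mult.commute)

locale L7 = prob_space M for M :: "'a measure" +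
  fixes X :: "nat \<Rightarrow> 'a \<Rightarrow> real" and p :: nat
  assumes indep: "indep_vars (\<lambda>_. borel) X UNIV"
    and ident: "\<And>i. distr M borel (X i) = distr M borel (X 0)"
    and pos: "\<And>i \<omega>. \<omega> \<in> space M \<Longrightarrow> X i \<omega> > 0"
    and mean: "integral\<^sup>L M (X 0) = 1"
    and p2: "p \<ge> 2"
    and mom: "integrable M (\<lambda>\<omega>. (X 0 \<omega>) ^ (p + 2))"
begin

lemma rv[measurable]: "X i \<in> borel_measurable M"
  using indep unfolding indep_vars_def by auto

lemma same_integral:
  fixes g :: "real \<Rightarrow> real"
  assumes [measurable]: "g \<in> borel_measurable borel"
  shows "(\<integral>\<omega>. g (X i \<omega>) \<partial>M) = (\<integral>\<omega>. g (X 0 \<omega>) \<partial>M)"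
proof -
  have "(\<integral>\<omega>. g (X i \<omega>) \<partial>M) = integral\<^sup>L (distr M borel (X i)) g"
    using integral_distr[OF rv[of i] assms] by simp
  also have "\<dots> = integral\<^sup>L (distr M borel (X 0)) g" by (subst ident[of i]) (rule refl)
  also have "\<dots> = (\<integral>\<omega>. g (X 0 \<omega>) \<partial>M)" using integral_distr[OF rv[of 0] assms] by simp
  finally show ?thesis .
qed

lemma same_integrable:
  fixes g :: "real \<Rightarrow> real"
  assumes [measurable]: "g \<in> borel_measurable borel"
  shows "integrable M (\<lambda>\<omega>. g (X i \<omega>)) \<longleftrightarrow> integrable M (\<lambda>\<omega>. g (X 0 \<omega>))"
proof -
  have "integrable M (\<lambda>\<omega>. g (X i \<omega>)) \<longleftrightarrow> integrable (distr M borel (X i)) g"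
    using integrable_distr_eq[OF rv[of i] assms] by simp
  also have "\<dots> \<longleftrightarrow> integrable (distr M borel (X 0)) g" by (subst ident[of i]) (rule refl)
  also have "\<dots> \<longleftrightarrow> integrable M (\<lambda>\<omega>. g (X 0 \<omega>))" using integrable_distr_eq[OF rv[of 0] assms] by simp
  finally show ?thesis .
qed

definition mm :: real where "mm = 1 + integral\<^sup>L M (\<lambda>\<omega>. (X 0 \<omega>) ^ (p + 2))"

lemma pow_le_aux: "0 \<le> (y::real) \<Longrightarrow> j \<le> k \<Longrightarrow> y ^ j \<le> 1 + y ^ k"
  by (smt (verit, best) one_le_power power_increasing power_le_one zero_le_power)

lemma mom_int: assumes "j \<le> p + 2" shows "integrable M (\<lambda>\<omega>. (X i \<omega>) ^ j)"
proof -
  have "integrable M (\<lambda>\<omega>. (X i \<omega>) ^ (p+2))"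
    using same_integrable[of "\<lambda>y. y ^ (p+2)" i] mom by simp
  then have "integrable M (\<lambda>\<omega>. 1 + (X i \<omega>) ^ (p+2))" by simp
  then show ?thesis
  proof (rule Bochner_Integration.integrable_bound, goal_cases)
    case 1 show ?case by measurable
  next
    case 2 show ?case
    proof (intro AE_I2 impI)
      fix x assume "x \<in> space M"
      then have "X i x > 0" using pos by auto
      then have "(X i x) ^ j \<le> 1 + (X i x) ^ (p+2)" "0 \<le> (X i x) ^ j"
        using pow_le_aux[of "X i x" j "p+2"] assms by simp_all
      then show "norm (X i x ^ j) \<le> norm (1 + X i x ^ (p + 2))"
        by simp
    qed
  qed
qed

lemma mom_bound: assumes "j \<le> p + 2" shows "integral\<^sup>L M (\<lambda>\<omega>. (X i \<omega>) ^ j) \<le> mm"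
proof -
  have "integral\<^sup>L M (\<lambda>\<omega>. (X i \<omega>) ^ j) \<le> integral\<^sup>L M (\<lambda>\<omega>. 1 + (X i \<omega>) ^ (p+2))"
  proof (rule integral_mono)
    show "integrable M (\<lambda>\<omega>. (X i \<omega>) ^ j)" using mom_int assms by blast
    show "integrable M (\<lambda>\<omega>. 1 + (X i \<omega>) ^ (p+2))" using mom_int[of "p+2" i] by simp
    fix x assume "x \<in> space M"
    then have "X i x > 0" using pos by auto
    then show "(X i x) ^ j \<le> 1 + (X i x) ^ (p+2)" using pow_le_aux[of "X i x" j "p+2"] assms by simp
  qed
  also have "\<dots> = 1 + integral\<^sup>L M (\<lambda>\<omega>. (X i \<omega>) ^ (p+2))"
    using mom_int[of "p+2" i] by (simp add: prob_space)
  also have "\<dots> = mm" unfolding mm_def using same_integral[of "\<lambda>y. y^(p+2)" i] by simp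
  finally show ?thesis .
qed

lemma mm_ge1: "mm \<ge> 1"
proof -
  have "0 \<le> integral\<^sup>L M (\<lambda>\<omega>. (X 0 \<omega>) ^ (p + 2))"
    by (intro integral_nonneg_AE AE_I2) (use pos in \<open>auto simp: less_imp_le\<close>)
  then show ?thesis unfolding mm_def by simp
qed

lemma indep_split:
  fixes F G :: "(nat \<Rightarrow> real) \<Rightarrow> real"
  assumes KL: "K \<inter> L = {}"
    and F[measurable]: "F \<in> borel_measurable (PiM K (\<lambda>_. borel))"
    and G[measurable]: "G \<in> borel_measurable (PiM L (\<lambda>_. borel))"
    and iF: "integrable M (\<lambda>\<omega>. F (restrict (\<lambda>i. X i \<omega>) K))"
    and iG: "integrable M (\<lambda>\<omega>. G (restrict (\<lambda>i. X i \<omega>) L))"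
  shows "(\<integral>\<omega>. F (restrict (\<lambda>i. X i \<omega>) K) * G (restrict (\<lambda>i. X i \<omega>) L) \<partial>M)
      = (\<integral>\<omega>. F (restrict (\<lambda>i. X i \<omega>) K) \<partial>M) * (\<integral>\<omega>. G (restrict (\<lambda>i. X i \<omega>) L) \<partial>M)"
    and "integrable M (\<lambda>\<omega>. F (restrict (\<lambda>i. X i \<omega>) K) * G (restrict (\<lambda>i. X i \<omega>) L))"
proof -
  have "indep_var (PiM K (\<lambda>_. borel)) (\<lambda>\<omega>. restrict (\<lambda>i. X i \<omega>) K) (PiM L (\<lambda>_. borel)) (\<lambda>\<omega>. restrict (\<lambda>i. X i \<omega>) L)"
    using indep_var_restrict[OF indep KL] by auto
  from indep_var_compose[OF this F G]
  have *: "indep_var borel (\<lambda>\<omega>. F (restrict (\<lambda>i. X i \<omega>) K)) borel (\<lambda>\<omega>. G (restrict (\<lambda>i. X i \<omega>) L))"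
    by (simp add: comp_def)
  show "(\<integral>\<omega>. F (restrict (\<lambda>i. X i \<omega>) K) * G (restrict (\<lambda>i. X i \<omega>) L) \<partial>M)
      = (\<integral>\<omega>. F (restrict (\<lambda>i. X i \<omega>) K) \<partial>M) * (\<integral>\<omega>. G (restrict (\<lambda>i. X i \<omega>) L) \<partial>M)"
    using indep_var_lebesgue_integral[OF * iF iG] by simp
  show "integrable M (\<lambda>\<omega>. F (restrict (\<lambda>i. X i \<omega>) K) * G (restrict (\<lambda>i. X i \<omega>) L))"
    using indep_var_integrable[OF * iF iG] by simp
qed



lemma u_meas[measurable]: "(\<lambda>\<omega>. uu n (X i \<omega>)) \<in> borel_measurable M" by measurable

lemma Xpos: "\<omega> \<in> space M \<Longrightarrow> 0 \<le> X i \<omega>" using pos[of \<omega> i] by simp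

lemma u_int: assumes "0 < n" "1 \<le> k" "k \<le> p + 1"
  shows "integrable M (\<lambda>\<omega>. uu n (X i \<omega>) ^ k)"
proof (rule Bochner_Integration.integrable_bound)
  show "integrable M (\<lambda>\<omega>. real n ^ (k - 1) * X i \<omega> ^ (k + 1))"
    using mom_int[of "k+1" i] assms by simp
  show "(\<lambda>\<omega>. uu n (X i \<omega>) ^ k) \<in> borel_measurable M" by measurable
  show "AE x in M. norm (uu n (X i x) ^ k) \<le> norm (real n ^ (k - 1) * X i x ^ (k + 1))"
    using uu_pow[OF Xpos \<open>0 < n\<close> \<open>1 \<le> k\<close>] uu_nonneg[OF Xpos] Xpos by (auto intro!: AE_I2)
qed

lemma u_mom: assumes "0 < n" "1 \<le> k" "k \<le> p + 1"
  shows "integral\<^sup>L M (\<lambda>\<omega>. uu n (X i \<omega>) ^ k) \<le> real n ^ (k - 1) * mm"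
proof -
  have "integral\<^sup>L M (\<lambda>\<omega>. uu n (X i \<omega>) ^ k) \<le> integral\<^sup>L M (\<lambda>\<omega>. real n ^ (k - 1) * X i \<omega> ^ (k + 1))"
    by (intro integral_mono u_int assms) (use mom_int[of "k+1" i] assms uu_pow[OF Xpos \<open>0 < n\<close> \<open>1 \<le> k\<close>] in auto)
  also have "\<dots> = real n ^ (k - 1) * integral\<^sup>L M (\<lambda>\<omega>. X i \<omega> ^ (k + 1))" by simp
  also have "\<dots> \<le> real n ^ (k - 1) * mm"
    by (intro mult_left_mono mom_bound) (use assms in auto)
  finally show ?thesis .
qed

lemma u_mom2: assumes "0 < n"
  shows "integral\<^sup>L M (\<lambda>\<omega>. uu n (X i \<omega>) ^ 2) \<le> mm"
proof -
  have "integral\<^sup>L M (\<lambda>\<omega>. uu n (X i \<omega>) ^ 2) \<le> integral\<^sup>L M (\<lambda>\<omega>. X i \<omega> ^ 4)"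
    by (intro integral_mono u_int assms) (use mom_int[of 4 i] p2 assms uu_pow2[OF Xpos] in auto)
  also have "\<dots> \<le> mm" by (intro mom_bound) (use p2 in auto)
  finally show ?thesis .
qed

lemma S_int: assumes "finite J" "j \<le> p + 2"
  shows "integrable M (\<lambda>\<omega>. (\<Sum>i\<in>J. X i \<omega>) ^ j)"
proof (cases "J = {}")
  case True then show ?thesis by simp
next
  case False
  show ?thesis
  proof (rule Bochner_Integration.integrable_bound)
    show "integrable M (\<lambda>\<omega>. real (card J) ^ j * (\<Sum>i\<in>J. X i \<omega> ^ j))"
      using mom_int assms by auto
    show "(\<lambda>\<omega>. (\<Sum>i\<in>J. X i \<omega>) ^ j) \<in> borel_measurable M" by measurable
    show "AE x in M. norm ((\<Sum>i\<in>J. X i x) ^ j) \<le> norm (real (card J) ^ j * (\<Sum>i\<in>J. X i x ^ j))"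
    proof (intro AE_I2)
      fix x assume x: "x \<in> space M"
      have "0 \<le> (\<Sum>i\<in>J. X i x)" using Xpos[OF x] by (auto intro: sum_nonneg)
      moreover have "0 \<le> (\<Sum>i\<in>J. X i x ^ j)" using Xpos[OF x] by (auto intro: sum_nonneg)
      ultimately show "norm ((\<Sum>i\<in>J. X i x) ^ j) \<le> norm (real (card J) ^ j * (\<Sum>i\<in>J. X i x ^ j))"
        using sum_pow_le[OF assms(1) False, of "\<lambda>i. X i x" j] Xpos[OF x] by simp
    qed
  qed
qed

lemma U_int: assumes "finite J" "q \<le> p + 2" "0 < n"
  shows "integrable M (\<lambda>\<omega>. (\<Sum>i\<in>J. uu n (X i \<omega>)) ^ q)"
proof (rule Bochner_Integration.integrable_bound)
  show "integrable M (\<lambda>\<omega>. real n ^ q * (\<Sum>i\<in>J. X i \<omega>) ^ q)"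
    using S_int[OF assms(1,2)] by simp
  show "(\<lambda>\<omega>. (\<Sum>i\<in>J. uu n (X i \<omega>)) ^ q) \<in> borel_measurable M" by measurable
  show "AE x in M. norm ((\<Sum>i\<in>J. uu n (X i x)) ^ q) \<le> norm (real n ^ q * (\<Sum>i\<in>J. X i x) ^ q)"
  proof (intro AE_I2)
    fix x assume x: "x \<in> space M"
    have a: "0 \<le> (\<Sum>i\<in>J. uu n (X i x))" using Xpos[OF x] uu_nonneg by (auto intro: sum_nonneg)
    have "(\<Sum>i\<in>J. uu n (X i x)) \<le> (\<Sum>i\<in>J. real n * X i x)"
      by (intro sum_mono uu_le_lin Xpos[OF x] assms)
    also have "\<dots> = real n * (\<Sum>i\<in>J. X i x)" by (simp add: sum_distrib_left)
    finally have "(\<Sum>i\<in>J. uu n (X i x)) ^ q \<le> (real n * (\<Sum>i\<in>J. X i x)) ^ q"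
      by (intro power_mono a)
    then show "norm ((\<Sum>i\<in>J. uu n (X i x)) ^ q) \<le> norm (real n ^ q * (\<Sum>i\<in>J. X i x) ^ q)"
      using a Xpos[OF x] by (simp add: power_mult_distrib sum_nonneg)
  qed
qed

lemma indep_uU:
  assumes "0 < n" "finite L" "i \<notin> L" "1 \<le> k" "k \<le> p + 1" "q \<le> p + 2"
  shows "integral\<^sup>L M (\<lambda>\<omega>. uu n (X i \<omega>) ^ k * (\<Sum>j\<in>L. uu n (X j \<omega>)) ^ q)
       = integral\<^sup>L M (\<lambda>\<omega>. uu n (X i \<omega>) ^ k) * integral\<^sup>L M (\<lambda>\<omega>. (\<Sum>j\<in>L. uu n (X j \<omega>)) ^ q)"
    and "integrable M (\<lambda>\<omega>. uu n (X i \<omega>) ^ k * (\<Sum>j\<in>L. uu n (X j \<omega>)) ^ q)"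
proof -
  have KL: "{i} \<inter> L = {}" using assms by auto
  have F: "(\<lambda>x. uu n (x i) ^ k) \<in> borel_measurable (PiM {i} (\<lambda>_. borel))" by measurable
  have G: "(\<lambda>x. (\<Sum>j\<in>L. uu n (x j)) ^ q) \<in> borel_measurable (PiM L (\<lambda>_. borel))" by measurable
  have eF: "\<And>\<omega>. (\<lambda>x. uu n (x i) ^ k) (restrict (\<lambda>i. X i \<omega>) {i}) = uu n (X i \<omega>) ^ k" by simp
  have eG: "\<And>\<omega>. (\<lambda>x. (\<Sum>j\<in>L. uu n (x j)) ^ q) (restrict (\<lambda>i. X i \<omega>) L) = (\<Sum>j\<in>L. uu n (X j \<omega>)) ^ q"
    using assms by simp
  have iF: "integrable M (\<lambda>\<omega>. (\<lambda>x. uu n (x i) ^ k) (restrict (\<lambda>i. X i \<omega>) {i}))"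
    unfolding eF by (rule u_int[OF assms(1,4,5)])
  have iG: "integrable M (\<lambda>\<omega>. (\<lambda>x. (\<Sum>j\<in>L. uu n (x j)) ^ q) (restrict (\<lambda>i. X i \<omega>) L))"
    unfolding eG by (rule U_int[OF assms(2,6,1)])
  note * = indep_split[OF KL F G iF iG, unfolded eF eG]
  show "integral\<^sup>L M (\<lambda>\<omega>. uu n (X i \<omega>) ^ k * (\<Sum>j\<in>L. uu n (X j \<omega>)) ^ q)
       = integral\<^sup>L M (\<lambda>\<omega>. uu n (X i \<omega>) ^ k) * integral\<^sup>L M (\<lambda>\<omega>. (\<Sum>j\<in>L. uu n (X j \<omega>)) ^ q)"
    using *(1) .
  show "integrable M (\<lambda>\<omega>. uu n (X i \<omega>) ^ k * (\<Sum>j\<in>L. uu n (X j \<omega>)) ^ q)"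
    using *(2) .
qed


lemma U_mom: assumes "0 < n" "q \<le> p"
  shows "\<forall>J. J \<subseteq> {1..n} \<longrightarrow> integral\<^sup>L M (\<lambda>\<omega>. (\<Sum>i\<in>J. uu n (X i \<omega>)) ^ q) \<le> Kc mm q * real n ^ q"
  using assms(2)
proof (induction q)
  case 0
  then show ?case by (simp add: prob_space)
next
  case (Suc q)
  show ?case
  proof (intro allI impI)
    fix J assume J: "J \<subseteq> {1..n}"
    have fJ: "finite J" using J finite_subset by blast
    have cJ: "real (card J) \<le> real n" using card_mono[OF _ J] by simp
    have IH: "\<And>i. integral\<^sup>L M (\<lambda>\<omega>. (\<Sum>j\<in>J-{i}. uu n (X j \<omega>)) ^ q) \<le> Kc mm q * real n ^ q"
    proof -
      fix i
      have "J - {i} \<subseteq> {1..n}" using J by auto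
      moreover have "q \<le> p" using Suc.prems by simp
      ultimately show "integral\<^sup>L M (\<lambda>\<omega>. (\<Sum>j\<in>J-{i}. uu n (X j \<omega>)) ^ q) \<le> Kc mm q * real n ^ q"
        using Suc.IH by blast
    qed
    have IH0: "\<And>i. 0 \<le> integral\<^sup>L M (\<lambda>\<omega>. (\<Sum>j\<in>J-{i}. uu n (X j \<omega>)) ^ q)"
      by (intro integral_nonneg_AE AE_I2 zero_le_power sum_nonneg uu_nonneg Xpos)
    define B where "B = (\<lambda>\<omega>. \<Sum>i\<in>J. 2 ^ q * (uu n (X i \<omega>) ^ Suc q + uu n (X i \<omega>) * (\<Sum>j\<in>J-{i}. uu n (X j \<omega>)) ^ q))"
    have iu1: "integrable M (\<lambda>\<omega>. uu n (X i \<omega>) * (\<Sum>j\<in>J-{i}. uu n (X j \<omega>)) ^ q)" for i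
      using indep_uU(2)[OF assms(1), of "J-{i}" i 1 q] fJ Suc.prems by simp
    have eu1: "integral\<^sup>L M (\<lambda>\<omega>. uu n (X i \<omega>) * (\<Sum>j\<in>J-{i}. uu n (X j \<omega>)) ^ q)
      = integral\<^sup>L M (\<lambda>\<omega>. uu n (X i \<omega>)) * integral\<^sup>L M (\<lambda>\<omega>. (\<Sum>j\<in>J-{i}. uu n (X j \<omega>)) ^ q)" for i
      using indep_uU(1)[OF assms(1), of "J-{i}" i 1 q] fJ Suc.prems by simp
    have iuq: "integrable M (\<lambda>\<omega>. uu n (X i \<omega>) ^ Suc q)" for i
      using u_int[OF assms(1), of "Suc q"] Suc.prems by simp
    have iB: "integrable M B" unfolding B_def
      by (intro Bochner_Integration.integrable_sum integrable_mult_right Bochner_Integration.integrable_add iu1 iuq)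
    have pw: "(\<Sum>i\<in>J. uu n (X i \<omega>)) ^ Suc q \<le> B \<omega>" if w: "\<omega> \<in> space M" for \<omega>
    proof -
      have "(\<Sum>i\<in>J. uu n (X i \<omega>)) ^ Suc q = (\<Sum>i\<in>J. uu n (X i \<omega>) * (\<Sum>i\<in>J. uu n (X i \<omega>)) ^ q)"
        by (simp add: sum_distrib_right)
      also have "\<dots> \<le> B \<omega>" unfolding B_def
      proof (intro sum_mono)
        fix i assume i: "i \<in> J"
        have u0: "0 \<le> uu n (X i \<omega>)" using uu_nonneg Xpos[OF w] by auto
        have r0: "0 \<le> (\<Sum>j\<in>J-{i}. uu n (X j \<omega>))" using uu_nonneg Xpos[OF w] by (auto intro: sum_nonneg)
        have "(\<Sum>i\<in>J. uu n (X i \<omega>)) = uu n (X i \<omega>) + (\<Sum>j\<in>J-{i}. uu n (X j \<omega>))"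
          using i fJ by (simp add: sum.remove)
        then have "(\<Sum>i\<in>J. uu n (X i \<omega>)) ^ q \<le> 2 ^ q * (uu n (X i \<omega>) ^ q + (\<Sum>j\<in>J-{i}. uu n (X j \<omega>)) ^ q)"
          using pow_add_le[OF u0 r0, of q] by simp
        then have "uu n (X i \<omega>) * (\<Sum>i\<in>J. uu n (X i \<omega>)) ^ q \<le> uu n (X i \<omega>) * (2 ^ q * (uu n (X i \<omega>) ^ q + (\<Sum>j\<in>J-{i}. uu n (X j \<omega>)) ^ q))"
          by (intro mult_left_mono u0)
        then show "uu n (X i \<omega>) * (\<Sum>i\<in>J. uu n (X i \<omega>)) ^ q \<le> 2 ^ q * (uu n (X i \<omega>) ^ Suc q + uu n (X i \<omega>) * (\<Sum>j\<in>J-{i}. uu n (X j \<omega>)) ^ q)"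
          by (simp add: algebra_simps)
      qed
      finally show ?thesis .
    qed
    have B0: "0 \<le> B \<omega>" if w: "\<omega> \<in> space M" for \<omega>
      unfolding B_def using uu_nonneg Xpos[OF w]
      by (intro sum_nonneg mult_nonneg_nonneg add_nonneg_nonneg zero_le_power) auto
    have "integral\<^sup>L M (\<lambda>\<omega>. (\<Sum>i\<in>J. uu n (X i \<omega>)) ^ Suc q) \<le> integral\<^sup>L M B"
      by (rule integral_mono'[OF iB pw B0])
    also have "integral\<^sup>L M B = (\<Sum>i\<in>J. 2 ^ q * (integral\<^sup>L M (\<lambda>\<omega>. uu n (X i \<omega>) ^ Suc q)
        + integral\<^sup>L M (\<lambda>\<omega>. uu n (X i \<omega>)) * integral\<^sup>L M (\<lambda>\<omega>. (\<Sum>j\<in>J-{i}. uu n (X j \<omega>)) ^ q)))"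
    proof -
      have e1: "integral\<^sup>L M (\<lambda>\<omega>. 2 ^ q * (uu n (X i \<omega>) ^ Suc q + uu n (X i \<omega>) * (\<Sum>j\<in>J-{i}. uu n (X j \<omega>)) ^ q))
         = 2 ^ q * (integral\<^sup>L M (\<lambda>\<omega>. uu n (X i \<omega>) ^ Suc q)
        + integral\<^sup>L M (\<lambda>\<omega>. uu n (X i \<omega>)) * integral\<^sup>L M (\<lambda>\<omega>. (\<Sum>j\<in>J-{i}. uu n (X j \<omega>)) ^ q))" for i
        by (simp only: integral_mult_right_zero Bochner_Integration.integral_add[OF iuq iu1] eu1)
      have i1: "integrable M (\<lambda>\<omega>. 2 ^ q * (uu n (X i \<omega>) ^ Suc q + uu n (X i \<omega>) * (\<Sum>j\<in>J-{i}. uu n (X j \<omega>)) ^ q))" for i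
        by (intro integrable_mult_right Bochner_Integration.integrable_add iu1 iuq)
      show ?thesis unfolding B_def
        by (subst Bochner_Integration.integral_sum[OF i1]) (simp only: e1)
    qed
    also have "\<dots> \<le> (\<Sum>i\<in>J. 2 ^ q * (real n ^ q * mm + mm * (Kc mm q * real n ^ q)))"
    proof (intro sum_mono mult_left_mono add_mono mult_mono)
      fix i
      show "integral\<^sup>L M (\<lambda>\<omega>. uu n (X i \<omega>) ^ Suc q) \<le> real n ^ q * mm"
        using u_mom[OF assms(1), of "Suc q" i] Suc.prems by simp
      show "integral\<^sup>L M (\<lambda>\<omega>. uu n (X i \<omega>)) \<le> mm"
        using u_mom[OF assms(1), of 1 i] by simp
      show "integral\<^sup>L M (\<lambda>\<omega>. (\<Sum>j\<in>J-{i}. uu n (X j \<omega>)) ^ q) \<le> Kc mm q * real n ^ q" by (rule IH)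
      show "0 \<le> mm" using mm_ge1 by simp
      show "0 \<le> integral\<^sup>L M (\<lambda>\<omega>. (\<Sum>j\<in>J-{i}. uu n (X j \<omega>)) ^ q)" by (rule IH0)
    qed simp
    also have "\<dots> = real (card J) * (2 ^ q * mm * (1 + Kc mm q) * real n ^ q)"
      by (simp add: algebra_simps)
    also have "\<dots> \<le> real n * (2 ^ q * mm * (1 + Kc mm q) * real n ^ q)"
      by (intro mult_right_mono cJ) (use mm_ge1 Kc_nonneg[of mm q] in auto)
    also have "\<dots> = Kc mm (Suc q) * real n ^ Suc q" by (simp add: algebra_simps)
    finally show "integral\<^sup>L M (\<lambda>\<omega>. (\<Sum>i\<in>J. uu n (X i \<omega>)) ^ Suc q) \<le> Kc mm (Suc q) * real n ^ Suc q" .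
  qed
qed


lemma same_u: "integral\<^sup>L M (\<lambda>\<omega>. uu n (X i \<omega>) ^ k) = integral\<^sup>L M (\<lambda>\<omega>. uu n (X 1 \<omega>) ^ k)"
  using same_integral[of "\<lambda>y. uu n y ^ k" i] same_integral[of "\<lambda>y. uu n y ^ k" 1] by simp

lemma WU_int: assumes "0 < n" "finite N"
  shows "integrable M (\<lambda>\<omega>. (\<Sum>i\<in>N. uu n (X i \<omega>) ^ 2) * (\<Sum>i\<in>N. uu n (X i \<omega>)) ^ (p - 1))"
proof (rule Bochner_Integration.integrable_bound)
  show "integrable M (\<lambda>\<omega>. (\<Sum>i\<in>N. uu n (X i \<omega>)) ^ (p + 1))" by (rule U_int) (use assms in auto)
  show "(\<lambda>\<omega>. (\<Sum>i\<in>N. uu n (X i \<omega>) ^ 2) * (\<Sum>i\<in>N. uu n (X i \<omega>)) ^ (p - 1)) \<in> borel_measurable M"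
    by measurable
  show "AE x in M. norm ((\<Sum>i\<in>N. uu n (X i x) ^ 2) * (\<Sum>i\<in>N. uu n (X i x)) ^ (p - 1)) \<le> norm ((\<Sum>i\<in>N. uu n (X i x)) ^ (p + 1))"
  proof (intro AE_I2)
    fix x assume x: "x \<in> space M"
    have u0: "\<And>i. 0 \<le> uu n (X i x)" using uu_nonneg Xpos[OF x] by auto
    have a: "0 \<le> (\<Sum>i\<in>N. uu n (X i x) ^ 2)" using u0 by (auto intro: sum_nonneg)
    have b: "0 \<le> (\<Sum>i\<in>N. uu n (X i x))" using u0 by (auto intro: sum_nonneg)
    have "(\<Sum>i\<in>N. uu n (X i x) ^ 2) \<le> (\<Sum>i\<in>N. uu n (X i x)) ^ 2"
    proof -
      have "(\<Sum>i\<in>N. uu n (X i x) ^ 2) \<le> (\<Sum>i\<in>N. uu n (X i x) * (\<Sum>i\<in>N. uu n (X i x)))"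
      proof (intro sum_mono)
        fix i assume "i \<in> N"
        then have "uu n (X i x) \<le> (\<Sum>i\<in>N. uu n (X i x))"
          using u0 assms(2) by (intro member_le_sum) auto
        then show "uu n (X i x) ^ 2 \<le> uu n (X i x) * (\<Sum>i\<in>N. uu n (X i x))"
          using u0[of i] by (simp add: power2_eq_square mult_left_mono)
      qed
      also have "\<dots> = (\<Sum>i\<in>N. uu n (X i x)) ^ 2" by (simp add: sum_distrib_right[symmetric] power2_eq_square)
      finally show ?thesis .
    qed
    then have "(\<Sum>i\<in>N. uu n (X i x) ^ 2) * (\<Sum>i\<in>N. uu n (X i x)) ^ (p - 1) \<le> (\<Sum>i\<in>N. uu n (X i x)) ^ 2 * (\<Sum>i\<in>N. uu n (X i x)) ^ (p - 1)"
      by (intro mult_right_mono zero_le_power b)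
    also have "\<dots> = (\<Sum>i\<in>N. uu n (X i x)) ^ (p + 1)"
      using p2 by (simp add: power_add[symmetric])
    finally show "norm ((\<Sum>i\<in>N. uu n (X i x) ^ 2) * (\<Sum>i\<in>N. uu n (X i x)) ^ (p - 1)) \<le> norm ((\<Sum>i\<in>N. uu n (X i x)) ^ (p + 1))"
      using a b by simp
  qed
qed


lemma WU_bound: assumes n0: "0 < n"
  shows "integral\<^sup>L M (\<lambda>\<omega>. (\<Sum>i\<in>{1..n}. uu n (X i \<omega>) ^ 2) * (\<Sum>i\<in>{1..n}. uu n (X i \<omega>)) ^ (p - 1))
    \<le> 2 ^ (p - 1) * (real n * integral\<^sup>L M (\<lambda>\<omega>. uu n (X 1 \<omega>) ^ (p + 1)) + mm * Kc mm (p - 1) * real n ^ p)"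
proof -
  define N where "N = {1..n}"
  define q where "q = p - 1"
  have pq: "p = Suc q" using p2 unfolding q_def by simp
  have fN: "finite N" unfolding N_def by simp
  have cN: "card N = n" unfolding N_def by simp
  have IH: "integral\<^sup>L M (\<lambda>\<omega>. (\<Sum>j\<in>N-{i}. uu n (X j \<omega>)) ^ q) \<le> Kc mm q * real n ^ q" for i
    using U_mom[OF n0, of q] unfolding N_def pq by auto
  have IH0: "0 \<le> integral\<^sup>L M (\<lambda>\<omega>. (\<Sum>j\<in>N-{i}. uu n (X j \<omega>)) ^ q)" for i
    by (intro integral_nonneg_AE AE_I2 zero_le_power sum_nonneg uu_nonneg Xpos)
  have iu1: "integrable M (\<lambda>\<omega>. uu n (X i \<omega>) ^ 2 * (\<Sum>j\<in>N-{i}. uu n (X j \<omega>)) ^ q)" for i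
    using indep_uU(2)[OF n0, of "N-{i}" i 2 q] fN pq by simp
  have eu1: "integral\<^sup>L M (\<lambda>\<omega>. uu n (X i \<omega>) ^ 2 * (\<Sum>j\<in>N-{i}. uu n (X j \<omega>)) ^ q)
      = integral\<^sup>L M (\<lambda>\<omega>. uu n (X i \<omega>) ^ 2) * integral\<^sup>L M (\<lambda>\<omega>. (\<Sum>j\<in>N-{i}. uu n (X j \<omega>)) ^ q)" for i
    using indep_uU(1)[OF n0, of "N-{i}" i 2 q] fN pq by simp
  have iuq: "integrable M (\<lambda>\<omega>. uu n (X i \<omega>) ^ (p + 1))" for i
    using u_int[OF n0, of "p + 1"] by simp
  define B where "B = (\<lambda>\<omega>. \<Sum>i\<in>N. 2 ^ q * (uu n (X i \<omega>) ^ (p + 1) + uu n (X i \<omega>) ^ 2 * (\<Sum>j\<in>N-{i}. uu n (X j \<omega>)) ^ q))"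
  have i1: "integrable M (\<lambda>\<omega>. 2 ^ q * (uu n (X i \<omega>) ^ (p + 1) + uu n (X i \<omega>) ^ 2 * (\<Sum>j\<in>N-{i}. uu n (X j \<omega>)) ^ q))" for i
    by (intro integrable_mult_right Bochner_Integration.integrable_add iu1 iuq)
  have iB: "integrable M B" unfolding B_def
    by (intro Bochner_Integration.integrable_sum i1)
  have pw: "(\<Sum>i\<in>N. uu n (X i \<omega>) ^ 2) * (\<Sum>i\<in>N. uu n (X i \<omega>)) ^ q \<le> B \<omega>" if w: "\<omega> \<in> space M" for \<omega>
  proof -
    have "(\<Sum>i\<in>N. uu n (X i \<omega>) ^ 2) * (\<Sum>i\<in>N. uu n (X i \<omega>)) ^ q = (\<Sum>i\<in>N. uu n (X i \<omega>) ^ 2 * (\<Sum>i\<in>N. uu n (X i \<omega>)) ^ q)"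
      by (simp add: sum_distrib_right)
    also have "\<dots> \<le> B \<omega>" unfolding B_def
    proof (intro sum_mono)
      fix i assume i: "i \<in> N"
      have u0: "0 \<le> uu n (X i \<omega>)" using uu_nonneg Xpos[OF w] by auto
      have r0: "0 \<le> (\<Sum>j\<in>N-{i}. uu n (X j \<omega>))" using uu_nonneg Xpos[OF w] by (auto intro: sum_nonneg)
      have "(\<Sum>i\<in>N. uu n (X i \<omega>)) = uu n (X i \<omega>) + (\<Sum>j\<in>N-{i}. uu n (X j \<omega>))"
        using i fN by (simp add: sum.remove)
      then have "(\<Sum>i\<in>N. uu n (X i \<omega>)) ^ q \<le> 2 ^ q * (uu n (X i \<omega>) ^ q + (\<Sum>j\<in>N-{i}. uu n (X j \<omega>)) ^ q)"
        using pow_add_le[OF u0 r0, of q] by simp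
      then have "uu n (X i \<omega>) ^ 2 * (\<Sum>i\<in>N. uu n (X i \<omega>)) ^ q \<le> uu n (X i \<omega>) ^ 2 * (2 ^ q * (uu n (X i \<omega>) ^ q + (\<Sum>j\<in>N-{i}. uu n (X j \<omega>)) ^ q))"
        by (intro mult_left_mono) auto
      also have "\<dots> = 2 ^ q * (uu n (X i \<omega>) ^ (p + 1) + uu n (X i \<omega>) ^ 2 * (\<Sum>j\<in>N-{i}. uu n (X j \<omega>)) ^ q)"
        unfolding pq by (simp add: algebra_simps power_add[symmetric] power2_eq_square)
      finally show "uu n (X i \<omega>) ^ 2 * (\<Sum>i\<in>N. uu n (X i \<omega>)) ^ q \<le> 2 ^ q * (uu n (X i \<omega>) ^ (p + 1) + uu n (X i \<omega>) ^ 2 * (\<Sum>j\<in>N-{i}. uu n (X j \<omega>)) ^ q)" .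
    qed
    finally show ?thesis .
  qed
  have B0: "0 \<le> B \<omega>" if w: "\<omega> \<in> space M" for \<omega>
    unfolding B_def using uu_nonneg Xpos[OF w]
    by (intro sum_nonneg mult_nonneg_nonneg add_nonneg_nonneg zero_le_power) auto
  have "integral\<^sup>L M (\<lambda>\<omega>. (\<Sum>i\<in>N. uu n (X i \<omega>) ^ 2) * (\<Sum>i\<in>N. uu n (X i \<omega>)) ^ q) \<le> integral\<^sup>L M B"
    by (rule integral_mono'[OF iB pw B0])
  also have "integral\<^sup>L M B = (\<Sum>i\<in>N. 2 ^ q * (integral\<^sup>L M (\<lambda>\<omega>. uu n (X i \<omega>) ^ (p + 1))
      + integral\<^sup>L M (\<lambda>\<omega>. uu n (X i \<omega>) ^ 2) * integral\<^sup>L M (\<lambda>\<omega>. (\<Sum>j\<in>N-{i}. uu n (X j \<omega>)) ^ q)))"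
  proof -
    have e1: "integral\<^sup>L M (\<lambda>\<omega>. 2 ^ q * (uu n (X i \<omega>) ^ (p + 1) + uu n (X i \<omega>) ^ 2 * (\<Sum>j\<in>N-{i}. uu n (X j \<omega>)) ^ q))
       = 2 ^ q * (integral\<^sup>L M (\<lambda>\<omega>. uu n (X i \<omega>) ^ (p + 1))
      + integral\<^sup>L M (\<lambda>\<omega>. uu n (X i \<omega>) ^ 2) * integral\<^sup>L M (\<lambda>\<omega>. (\<Sum>j\<in>N-{i}. uu n (X j \<omega>)) ^ q))" for i
      by (simp only: integral_mult_right_zero Bochner_Integration.integral_add[OF iuq iu1] eu1)
    show ?thesis unfolding B_def
      by (subst Bochner_Integration.integral_sum[OF i1]) (simp only: e1)
  qed
  also have "\<dots> \<le> (\<Sum>i\<in>N. 2 ^ q * (integral\<^sup>L M (\<lambda>\<omega>. uu n (X 1 \<omega>) ^ (p + 1)) + mm * (Kc mm q * real n ^ q)))"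
  proof (intro sum_mono mult_left_mono add_mono mult_mono)
    fix i
    show "integral\<^sup>L M (\<lambda>\<omega>. uu n (X i \<omega>) ^ (p + 1)) \<le> integral\<^sup>L M (\<lambda>\<omega>. uu n (X 1 \<omega>) ^ (p + 1))"
      using same_u[of n i "p+1"] by (rule eq_refl)
    show "integral\<^sup>L M (\<lambda>\<omega>. uu n (X i \<omega>) ^ 2) \<le> mm"
      using u_mom2[OF n0, of i] by simp
    show "integral\<^sup>L M (\<lambda>\<omega>. (\<Sum>j\<in>N-{i}. uu n (X j \<omega>)) ^ q) \<le> Kc mm q * real n ^ q" by (rule IH)
    show "0 \<le> mm" using mm_ge1 by simp
    show "0 \<le> integral\<^sup>L M (\<lambda>\<omega>. (\<Sum>j\<in>N-{i}. uu n (X j \<omega>)) ^ q)" by (rule IH0)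
  qed simp
  also have "\<dots> = 2 ^ q * (real n * integral\<^sup>L M (\<lambda>\<omega>. uu n (X 1 \<omega>) ^ (p + 1)) + mm * Kc mm q * real n ^ p)"
    by (simp add: cN algebra_simps pq)
  finally show ?thesis unfolding N_def q_def .
qed


lemma U_pow_expand:
  fixes g :: "nat \<Rightarrow> real"
  assumes "finite N"
  shows "(\<Sum>i\<in>N. g i) ^ p = (\<Sum>f\<in>PiE {..<p} (\<lambda>_. N). \<Prod>l<p. g (f l))"
proof -
  have "(\<Sum>i\<in>N. g i) ^ p = (\<Prod>l<p. \<Sum>i\<in>N. g i)" by simp
  also have "\<dots> = (\<Sum>f\<in>PiE {..<p} (\<lambda>_. N). \<Prod>l<p. g (f l))"
    using prod_sum_PiE[of "{..<p}" "\<lambda>_. N" "\<lambda>_ i. g i"] assms by simp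
  finally show ?thesis .
qed

lemma tuple_pw: assumes np: "p < n" and w: "\<omega> \<in> space M"
  shows "(\<Sum>i\<in>{1..n}. uu n (X i \<omega>)) ^ p * (maxX X n \<omega>)^2 / (1 + psum X n \<omega> / real n)
    \<le> (\<Sum>f\<in>PiE {..<p} (\<lambda>_. {1..n}). (\<Prod>l<p. uu n (X (f l) \<omega>)) * (\<Sum>l<p. uu n (X (f l) \<omega>)))
      + (\<Sum>f\<in>PiE {..<p} (\<lambda>_. {1..n}). (\<Prod>l<p. uu n (X (f l) \<omega>)) * Max ((\<lambda>j. (X j \<omega>)^2) ` ({1..n} - f ` {..<p})))"
proof -
  define N where "N = {1..n}"
  define D where "D = (maxX X n \<omega>)^2 / (1 + psum X n \<omega> / real n)"
  have n0: "0 < n" using np by simp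
  have x0: "\<And>i. 0 \<le> X i \<omega>" using Xpos[OF w] .
  have u0: "\<And>i. 0 \<le> uu n (X i \<omega>)" using uu_nonneg x0 by auto
  have fN: "finite N" "N \<noteq> {}" unfolding N_def using n0 by auto
  have "Max ((\<lambda>i. X i \<omega>) ` N) \<in> (\<lambda>i. X i \<omega>) ` N" using fN by (intro Max_in) auto
  then obtain k where k0: "k \<in> N" "Max ((\<lambda>i. X i \<omega>) ` N) = X k \<omega>" by auto
  then have k: "k \<in> N" "maxX X n \<omega> = X k \<omega>" unfolding maxX_def N_def by auto
  have S_ge: "X k \<omega> \<le> psum X n \<omega>"
    unfolding psum_def using k(1) x0 unfolding N_def by (intro member_le_sum) auto
  have key: "D \<le> (\<Sum>l<p. uu n (X (f l) \<omega>)) + Max ((\<lambda>j. (X j \<omega>)^2) ` (N - f ` {..<p}))"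
    if f: "f \<in> PiE {..<p} (\<lambda>_. N)" for f
  proof -
    have cardI: "card (f ` {..<p}) \<le> p" using card_image_le[of "{..<p}" f] by simp
    have "card N = n" unfolding N_def by simp
    have "N - f ` {..<p} \<noteq> {}"
    proof
      assume "N - f ` {..<p} = {}"
      then have "N \<subseteq> f ` {..<p}" by auto
      then have "card N \<le> card (f ` {..<p})" by (intro card_mono) auto
      then show False using \<open>card N = n\<close> cardI np by simp
    qed
    then have fin2: "finite ((\<lambda>j. (X j \<omega>)^2) ` (N - f ` {..<p}))" "((\<lambda>j. (X j \<omega>)^2) ` (N - f ` {..<p})) \<noteq> {}"
      using fN by auto
    have Mc0: "0 \<le> Max ((\<lambda>j. (X j \<omega>)^2) ` (N - f ` {..<p}))"
      using fin2 Max_in[OF fin2] by force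
    have sum0: "0 \<le> (\<Sum>l<p. uu n (X (f l) \<omega>))" using u0 by (auto intro: sum_nonneg)
    have den: "1 \<le> 1 + psum X n \<omega> / real n" unfolding psum_def using x0 by (auto intro!: divide_nonneg_nonneg sum_nonneg)
    have D_le: "D \<le> (X k \<omega>)^2" unfolding D_def k(2)
      using divide_left_mono[OF den, of "(X k \<omega>)^2"] den by simp
    show ?thesis
    proof (cases "k \<in> f ` {..<p}")
      case True
      then obtain l where l: "l < p" "f l = k" by auto
      have "D \<le> uu n (X k \<omega>)" unfolding D_def k(2) uu_def
      proof (rule divide_left_mono)
        show "1 + X k \<omega> / real n \<le> 1 + psum X n \<omega> / real n"
          using S_ge n0 by (simp add: divide_right_mono)
        show "0 \<le> (X k \<omega>)^2" by simp
        have "0 < 1 + X k \<omega> / real n" using x0[of k] n0 by (simp add: add_pos_nonneg)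
        then show "0 < (1 + psum X n \<omega> / real n) * (1 + X k \<omega> / real n)"
          using den by simp
      qed
      also have "\<dots> \<le> (\<Sum>l<p. uu n (X (f l) \<omega>))"
        using l u0 member_le_sum[of l "{..<p}" "\<lambda>l. uu n (X (f l) \<omega>)"] by auto
      finally show ?thesis using Mc0 by simp
    next
      case False
      then have "k \<in> N - f ` {..<p}" using k by auto
      then have "(X k \<omega>)^2 \<le> Max ((\<lambda>j. (X j \<omega>)^2) ` (N - f ` {..<p}))"
        using fin2 by (intro Max_ge) auto
      then show ?thesis using D_le sum0 by simp
    qed
  qed
  have "(\<Sum>i\<in>N. uu n (X i \<omega>)) ^ p * (maxX X n \<omega>)^2 / (1 + psum X n \<omega> / real n)
      = (\<Sum>f\<in>PiE {..<p} (\<lambda>_. N). (\<Prod>l<p. uu n (X (f l) \<omega>)) * D)"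
    unfolding U_pow_expand[OF fN(1)] D_def by (simp add: sum_distrib_right sum_divide_distrib)
  also have "\<dots> \<le> (\<Sum>f\<in>PiE {..<p} (\<lambda>_. N). (\<Prod>l<p. uu n (X (f l) \<omega>)) *
      ((\<Sum>l<p. uu n (X (f l) \<omega>)) + Max ((\<lambda>j. (X j \<omega>)^2) ` (N - f ` {..<p}))))"
    by (intro sum_mono mult_left_mono key) (auto intro: prod_nonneg u0)
  also have "\<dots> = (\<Sum>f\<in>PiE {..<p} (\<lambda>_. N). (\<Prod>l<p. uu n (X (f l) \<omega>)) * (\<Sum>l<p. uu n (X (f l) \<omega>)))
      + (\<Sum>f\<in>PiE {..<p} (\<lambda>_. N). (\<Prod>l<p. uu n (X (f l) \<omega>)) * Max ((\<lambda>j. (X j \<omega>)^2) ` (N - f ` {..<p})))"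
    by (simp add: distrib_left sum.distrib)
  finally show ?thesis unfolding N_def .
qed


lemma tuple_W:
  fixes g :: "nat \<Rightarrow> real"
  assumes fN: "finite N"
  shows "(\<Sum>f\<in>PiE {..<p} (\<lambda>_. N). (\<Prod>l<p. g (f l)) * (\<Sum>l<p. g (f l)))
     = real p * ((\<Sum>i\<in>N. g i ^ 2) * (\<Sum>i\<in>N. g i) ^ (p - 1))"
proof -
  have one: "(\<Sum>f\<in>PiE {..<p} (\<lambda>_. N). (\<Prod>m<p. g (f m)) * g (f l)) = (\<Sum>i\<in>N. g i ^ 2) * (\<Sum>i\<in>N. g i) ^ (p - 1)"
    if l: "l < p" for l
  proof -
    define h where "h = (\<lambda>m i. if m = l then g i ^ 2 else g i)"
    have "(\<Sum>f\<in>PiE {..<p} (\<lambda>_. N). (\<Prod>m<p. g (f m)) * g (f l)) = (\<Sum>f\<in>PiE {..<p} (\<lambda>_. N). \<Prod>m<p. h m (f m))"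
    proof (intro sum.cong refl)
      fix f
      have "(\<Prod>m<p. h m (f m)) = h l (f l) * (\<Prod>m\<in>{..<p}-{l}. h m (f m))"
        using l by (subst prod.remove[of _ l]) auto
      also have "(\<Prod>m\<in>{..<p}-{l}. h m (f m)) = (\<Prod>m\<in>{..<p}-{l}. g (f m))"
        unfolding h_def by (intro prod.cong) auto
      also have "(\<Prod>m<p. g (f m)) = g (f l) * (\<Prod>m\<in>{..<p}-{l}. g (f m))"
        using l by (subst prod.remove[of _ l]) auto
      ultimately show "(\<Prod>m<p. g (f m)) * g (f l) = (\<Prod>m<p. h m (f m))"
        unfolding h_def by (simp add: power2_eq_square)
    qed
    also have "\<dots> = (\<Prod>m<p. \<Sum>i\<in>N. h m i)"
      using prod_sum_PiE[of "{..<p}" "\<lambda>_. N" h] fN by simp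
    also have "\<dots> = (\<Sum>i\<in>N. h l i) * (\<Prod>m\<in>{..<p}-{l}. \<Sum>i\<in>N. h m i)"
      using l by (subst prod.remove[of _ l]) auto
    also have "(\<Prod>m\<in>{..<p}-{l}. \<Sum>i\<in>N. h m i) = (\<Prod>m\<in>{..<p}-{l}. \<Sum>i\<in>N. g i)"
      unfolding h_def by (intro prod.cong) auto
    also have "\<dots> = (\<Sum>i\<in>N. g i) ^ (p - 1)" using l by simp
    finally show ?thesis unfolding h_def by simp
  qed
  have "(\<Sum>f\<in>PiE {..<p} (\<lambda>_. N). (\<Prod>l<p. g (f l)) * (\<Sum>l<p. g (f l)))
      = (\<Sum>l<p. \<Sum>f\<in>PiE {..<p} (\<lambda>_. N). (\<Prod>m<p. g (f m)) * g (f l))"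
    by (simp add: sum_distrib_left sum.swap[of _ _ "{..<p}"])
  also have "\<dots> = (\<Sum>l<p. (\<Sum>i\<in>N. g i ^ 2) * (\<Sum>i\<in>N. g i) ^ (p - 1))"
    by (intro sum.cong refl one) auto
  also have "\<dots> = real p * ((\<Sum>i\<in>N. g i ^ 2) * (\<Sum>i\<in>N. g i) ^ (p - 1))" by simp
  finally show ?thesis .
qed


lemma maxX_meas[measurable]: "maxX X n \<in> borel_measurable M"
proof -
  have "(\<lambda>\<omega>. Max ((\<lambda>i. X i \<omega>) ` {1..n})) \<in> borel_measurable M"
    by (rule borel_measurable_Max) auto
  then show ?thesis unfolding maxX_def[abs_def] .
qed

lemma maxX_bounds: assumes "0 < n" "\<omega> \<in> space M"
  shows "0 \<le> maxX X n \<omega>" "maxX X n \<omega> \<le> psum X n \<omega>" "\<And>i. i \<in> {1..n} \<Longrightarrow> X i \<omega> \<le> maxX X n \<omega>"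
proof -
  have fin: "finite ((\<lambda>i. X i \<omega>) ` {1..n})" "(\<lambda>i. X i \<omega>) ` {1..n} \<noteq> {}" using assms by auto
  have "Max ((\<lambda>i. X i \<omega>) ` {1..n}) \<in> (\<lambda>i. X i \<omega>) ` {1..n}" using fin by (intro Max_in)
  then obtain k where k: "k \<in> {1..n}" "maxX X n \<omega> = X k \<omega>" unfolding maxX_def by auto
  show "0 \<le> maxX X n \<omega>" using k Xpos[OF assms(2)] by simp
  show "maxX X n \<omega> \<le> psum X n \<omega>" unfolding k(2) psum_def
    using k(1) Xpos[OF assms(2)] by (intro member_le_sum) auto
  show "\<And>i. i \<in> {1..n} \<Longrightarrow> X i \<omega> \<le> maxX X n \<omega>" unfolding maxX_def using fin by auto
qed

lemma M2_int: assumes "0 < n" shows "integrable M (\<lambda>\<omega>. (maxX X n \<omega>)^2)"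
proof (rule Bochner_Integration.integrable_bound)
  show "integrable M (\<lambda>\<omega>. (\<Sum>i\<in>{1..n}. X i \<omega>) ^ 2)" by (rule S_int) auto
  show "(\<lambda>\<omega>. (maxX X n \<omega>)^2) \<in> borel_measurable M" by measurable
  show "AE x in M. norm ((maxX X n x)^2) \<le> norm ((\<Sum>i\<in>{1..n}. X i x) ^ 2)"
  proof (intro AE_I2)
    fix x assume x: "x \<in> space M"
    have "(maxX X n x)^2 \<le> (psum X n x)^2"
      using maxX_bounds[OF assms x] by (intro power_mono) auto
    then show "norm ((maxX X n x)^2) \<le> norm ((\<Sum>i\<in>{1..n}. X i x) ^ 2)" unfolding psum_def by simp
  qed
qed

lemma prodU_int: assumes "0 < n" "f \<in> PiE {..<p} (\<lambda>_. {1..n})"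
  shows "integrable M (\<lambda>\<omega>. \<Prod>l<p. uu n (X (f l) \<omega>))"
proof (rule Bochner_Integration.integrable_bound)
  show "integrable M (\<lambda>\<omega>. real n ^ p * (\<Sum>i\<in>{1..n}. X i \<omega>) ^ p)" using S_int[of "{1..n}" p] by simp
  show "(\<lambda>\<omega>. \<Prod>l<p. uu n (X (f l) \<omega>)) \<in> borel_measurable M" by measurable
  show "AE x in M. norm (\<Prod>l<p. uu n (X (f l) x)) \<le> norm (real n ^ p * (\<Sum>i\<in>{1..n}. X i x) ^ p)"
  proof (intro AE_I2)
    fix x assume x: "x \<in> space M"
    have S0: "0 \<le> (\<Sum>i\<in>{1..n}. X i x)" using Xpos[OF x] by (auto intro: sum_nonneg)
    have "(\<Prod>l<p. uu n (X (f l) x)) \<le> (\<Prod>l<p. real n * (\<Sum>i\<in>{1..n}. X i x))"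
    proof (intro prod_mono conjI)
      fix l assume l: "l \<in> {..<p}"
      show "0 \<le> uu n (X (f l) x)" using uu_nonneg Xpos[OF x] by auto
      have "uu n (X (f l) x) \<le> real n * X (f l) x" using uu_le_lin Xpos[OF x] assms(1) by auto
      also have "X (f l) x \<le> (\<Sum>i\<in>{1..n}. X i x)"
        using assms(2) l Xpos[OF x] by (intro member_le_sum) auto
      then have "real n * X (f l) x \<le> real n * (\<Sum>i\<in>{1..n}. X i x)" by (intro mult_left_mono) auto
      finally show "uu n (X (f l) x) \<le> real n * (\<Sum>i\<in>{1..n}. X i x)" .
    qed
    also have "\<dots> = real n ^ p * (\<Sum>i\<in>{1..n}. X i x) ^ p" by (simp add: power_mult_distrib)
    finally show "norm (\<Prod>l<p. uu n (X (f l) x)) \<le> norm (real n ^ p * (\<Sum>i\<in>{1..n}. X i x) ^ p)"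
      using S0 uu_nonneg Xpos[OF x] by (simp add: prod_nonneg abs_of_nonneg)
  qed
qed

lemma Mc_facts: assumes np: "p < n" and f: "f \<in> PiE {..<p} (\<lambda>_. {1..n})"
  shows "integral\<^sup>L M (\<lambda>\<omega>. (\<Prod>l<p. uu n (X (f l) \<omega>)) * Max ((\<lambda>j. (X j \<omega>)^2) ` ({1..n} - f ` {..<p})))
     \<le> integral\<^sup>L M (\<lambda>\<omega>. \<Prod>l<p. uu n (X (f l) \<omega>)) * integral\<^sup>L M (\<lambda>\<omega>. (maxX X n \<omega>)^2)"
   and "integrable M (\<lambda>\<omega>. (\<Prod>l<p. uu n (X (f l) \<omega>)) * Max ((\<lambda>j. (X j \<omega>)^2) ` ({1..n} - f ` {..<p})))"
proof -
  define K where "K = f ` {..<p}"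
  define L where "L = {1..n} - K"
  have n0: "0 < n" using np by simp
  have KN: "K \<subseteq> {1..n}" unfolding K_def using f by auto
  have KL: "K \<inter> L = {}" unfolding L_def by auto
  have fL: "finite L" unfolding L_def by auto
  have "card K \<le> p" unfolding K_def using card_image_le[of "{..<p}" f] by simp
  have Lne: "L \<noteq> {}"
  proof
    assume "L = {}"
    then have "{1..n} \<subseteq> K" unfolding L_def by auto
    then have "card {1..n} \<le> card K" unfolding K_def by (intro card_mono) auto
    then show False using \<open>card K \<le> p\<close> np by simp
  qed
  have Fm: "(\<lambda>x. \<Prod>l<p. uu n (x (f l))) \<in> borel_measurable (PiM K (\<lambda>_. borel))"
    by measurable (auto simp: K_def)
  have Gm: "(\<lambda>x. Max ((\<lambda>j. (x j :: real)^2) ` L)) \<in> borel_measurable (PiM L (\<lambda>_. borel))"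
    by (rule borel_measurable_Max[OF fL]) measurable
  have eF: "(\<lambda>x. \<Prod>l<p. uu n (x (f l))) (restrict (\<lambda>i. X i \<omega>) K) = (\<Prod>l<p. uu n (X (f l) \<omega>))" for \<omega>
    by (auto simp: K_def intro!: prod.cong)
  have eG: "(\<lambda>x. Max ((\<lambda>j. (x j :: real)^2) ` L)) (restrict (\<lambda>i. X i \<omega>) L) = Max ((\<lambda>j. (X j \<omega>)^2) ` L)" for \<omega>
    by (auto intro!: arg_cong[where f=Max] image_cong)
  have Mc_le: "Max ((\<lambda>j. (X j \<omega>)^2) ` L) \<le> (maxX X n \<omega>)^2" if w: "\<omega> \<in> space M" for \<omega>
  proof -
    have "\<forall>a\<in>(\<lambda>j. (X j \<omega>)^2) ` L. a \<le> (maxX X n \<omega>)^2"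
    proof
      fix a assume "a \<in> (\<lambda>j. (X j \<omega>)^2) ` L"
      then obtain j where j: "j \<in> L" "a = (X j \<omega>)^2" by auto
      have "X j \<omega> \<le> maxX X n \<omega>" using maxX_bounds(3)[OF n0 w] j(1) unfolding L_def by auto
      then show "a \<le> (maxX X n \<omega>)^2" unfolding j(2) using Xpos[OF w] by (intro power_mono) auto
    qed
    then show ?thesis using fL Lne by (subst Max_le_iff) auto
  qed
  have Mc0: "0 \<le> Max ((\<lambda>j. (X j \<omega>)^2) ` L)" for \<omega>
  proof -
    obtain j where "j \<in> L" using Lne by auto
    then have "(X j \<omega>)^2 \<le> Max ((\<lambda>j. (X j \<omega>)^2) ` L)" using fL by (intro Max_ge) auto
    then show ?thesis by (smt (verit) zero_le_power2)
  qed
  have iG: "integrable M (\<lambda>\<omega>. Max ((\<lambda>j. (X j \<omega>)^2) ` L))"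
  proof (rule Bochner_Integration.integrable_bound[OF M2_int[OF n0]])
    show "(\<lambda>\<omega>. Max ((\<lambda>j. (X j \<omega>)^2) ` L)) \<in> borel_measurable M"
      by (rule borel_measurable_Max[OF fL]) measurable
    show "AE x in M. norm (Max ((\<lambda>j. (X j x)^2) ` L)) \<le> norm ((maxX X n x)^2)"
      using Mc_le Mc0 by (auto intro!: AE_I2)
  qed
  have iF: "integrable M (\<lambda>\<omega>. \<Prod>l<p. uu n (X (f l) \<omega>))" by (rule prodU_int[OF n0 f])
  note * = indep_split[OF KL Fm Gm, unfolded eF eG, OF iF iG]
  show "integrable M (\<lambda>\<omega>. (\<Prod>l<p. uu n (X (f l) \<omega>)) * Max ((\<lambda>j. (X j \<omega>)^2) ` ({1..n} - f ` {..<p})))"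
    using *(2) unfolding L_def K_def .
  have "integral\<^sup>L M (\<lambda>\<omega>. (\<Prod>l<p. uu n (X (f l) \<omega>)) * Max ((\<lambda>j. (X j \<omega>)^2) ` L))
     = integral\<^sup>L M (\<lambda>\<omega>. \<Prod>l<p. uu n (X (f l) \<omega>)) * integral\<^sup>L M (\<lambda>\<omega>. Max ((\<lambda>j. (X j \<omega>)^2) ` L))"
    using *(1) .
  also have "\<dots> \<le> integral\<^sup>L M (\<lambda>\<omega>. \<Prod>l<p. uu n (X (f l) \<omega>)) * integral\<^sup>L M (\<lambda>\<omega>. (maxX X n \<omega>)^2)"
  proof (intro mult_left_mono integral_mono iG M2_int n0 Mc_le)
    show "0 \<le> integral\<^sup>L M (\<lambda>\<omega>. \<Prod>l<p. uu n (X (f l) \<omega>))"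
      by (intro integral_nonneg_AE AE_I2 prod_nonneg) (auto intro!: uu_nonneg Xpos)
  qed
  finally show "integral\<^sup>L M (\<lambda>\<omega>. (\<Prod>l<p. uu n (X (f l) \<omega>)) * Max ((\<lambda>j. (X j \<omega>)^2) ` ({1..n} - f ` {..<p})))
     \<le> integral\<^sup>L M (\<lambda>\<omega>. \<Prod>l<p. uu n (X (f l) \<omega>)) * integral\<^sup>L M (\<lambda>\<omega>. (maxX X n \<omega>)^2)"
    unfolding L_def K_def .
qed


definition Zb :: "nat \<Rightarrow> 'a \<Rightarrow> real" where
  "Zb n \<omega> = (\<Sum>f\<in>PiE {..<p} (\<lambda>_. {1..n}). (\<Prod>l<p. uu n (X (f l) \<omega>)) * (\<Sum>l<p. uu n (X (f l) \<omega>)))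
      + (\<Sum>f\<in>PiE {..<p} (\<lambda>_. {1..n}). (\<Prod>l<p. uu n (X (f l) \<omega>)) * Max ((\<lambda>j. (X j \<omega>)^2) ` ({1..n} - f ` {..<p})))"

lemma Zb_nonneg: assumes "\<omega> \<in> space M" "p < n" shows "0 \<le> Zb n \<omega>"
proof -
  have "(\<Sum>i\<in>{1..n}. uu n (X i \<omega>)) ^ p * (maxX X n \<omega>)^2 / (1 + psum X n \<omega> / real n) \<ge> 0"
    using assms Xpos[OF assms(1)] uu_nonneg maxX_bounds(1)[of n \<omega>] unfolding psum_def
    by (intro divide_nonneg_nonneg mult_nonneg_nonneg zero_le_power sum_nonneg add_nonneg_nonneg) auto
  then show ?thesis using tuple_pw[OF assms(2,1)] unfolding Zb_def by linarith
qed

lemma Zb_bound: assumes np: "p < n"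
  shows "integrable M (Zb n)"
    and "integral\<^sup>L M (Zb n) \<le> real p * (2 ^ (p - 1) * (real n * integral\<^sup>L M (\<lambda>\<omega>. uu n (X 1 \<omega>) ^ (p + 1)) + mm * Kc mm (p - 1) * real n ^ p))
        + Kc mm p * real n ^ p * integral\<^sup>L M (\<lambda>\<omega>. (maxX X n \<omega>)^2)"
proof -
  define N where "N = {1..n}"
  define F where "F = PiE {..<p} (\<lambda>_. N)"
  have n0: "0 < n" using np by simp
  have fF: "finite F" unfolding F_def N_def by (simp add: finite_PiE)
  have e1: "(\<Sum>f\<in>F. (\<Prod>l<p. uu n (X (f l) \<omega>)) * (\<Sum>l<p. uu n (X (f l) \<omega>)))
     = real p * ((\<Sum>i\<in>N. uu n (X i \<omega>) ^ 2) * (\<Sum>i\<in>N. uu n (X i \<omega>)) ^ (p - 1))" for \<omega>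
    unfolding F_def N_def by (rule tuple_W) simp
  have i1: "integrable M (\<lambda>\<omega>. real p * ((\<Sum>i\<in>N. uu n (X i \<omega>) ^ 2) * (\<Sum>i\<in>N. uu n (X i \<omega>)) ^ (p - 1)))"
    using WU_int[OF n0, of N] unfolding N_def by simp
  have i2f: "integrable M (\<lambda>\<omega>. (\<Prod>l<p. uu n (X (f l) \<omega>)) * Max ((\<lambda>j. (X j \<omega>)^2) ` (N - f ` {..<p})))"
    if "f \<in> F" for f
    using Mc_facts(2)[OF np, of f] that unfolding F_def N_def by simp
  have i2: "integrable M (\<lambda>\<omega>. \<Sum>f\<in>F. (\<Prod>l<p. uu n (X (f l) \<omega>)) * Max ((\<lambda>j. (X j \<omega>)^2) ` (N - f ` {..<p})))"
    using i2f by (intro Bochner_Integration.integrable_sum) auto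
  have Zeq: "Zb n = (\<lambda>\<omega>. real p * ((\<Sum>i\<in>N. uu n (X i \<omega>) ^ 2) * (\<Sum>i\<in>N. uu n (X i \<omega>)) ^ (p - 1))
     + (\<Sum>f\<in>F. (\<Prod>l<p. uu n (X (f l) \<omega>)) * Max ((\<lambda>j. (X j \<omega>)^2) ` (N - f ` {..<p}))))"
    by (rule ext) (simp only: Zb_def e1[unfolded F_def N_def, symmetric] F_def N_def)
  show "integrable M (Zb n)" unfolding Zeq by (intro Bochner_Integration.integrable_add i1 i2)
  have ip: "integrable M (\<lambda>\<omega>. \<Prod>l<p. uu n (X (f l) \<omega>))" if "f \<in> F" for f
    using prodU_int[OF n0, of f] that unfolding F_def N_def by simp
  have "integral\<^sup>L M (Zb n) = real p * integral\<^sup>L M (\<lambda>\<omega>. (\<Sum>i\<in>N. uu n (X i \<omega>) ^ 2) * (\<Sum>i\<in>N. uu n (X i \<omega>)) ^ (p - 1))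
      + (\<Sum>f\<in>F. integral\<^sup>L M (\<lambda>\<omega>. (\<Prod>l<p. uu n (X (f l) \<omega>)) * Max ((\<lambda>j. (X j \<omega>)^2) ` (N - f ` {..<p}))))"
    unfolding Zeq
    by (simp only: Bochner_Integration.integral_add[OF i1 i2] integral_mult_right_zero Bochner_Integration.integral_sum[OF i2f])
  also have "\<dots> \<le> real p * (2 ^ (p - 1) * (real n * integral\<^sup>L M (\<lambda>\<omega>. uu n (X 1 \<omega>) ^ (p + 1)) + mm * Kc mm (p - 1) * real n ^ p))
      + (\<Sum>f\<in>F. integral\<^sup>L M (\<lambda>\<omega>. \<Prod>l<p. uu n (X (f l) \<omega>)) * integral\<^sup>L M (\<lambda>\<omega>. (maxX X n \<omega>)^2))"
  proof (intro add_mono mult_left_mono sum_mono)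
    show "integral\<^sup>L M (\<lambda>\<omega>. (\<Sum>i\<in>N. uu n (X i \<omega>) ^ 2) * (\<Sum>i\<in>N. uu n (X i \<omega>)) ^ (p - 1))
      \<le> 2 ^ (p - 1) * (real n * integral\<^sup>L M (\<lambda>\<omega>. uu n (X 1 \<omega>) ^ (p + 1)) + mm * Kc mm (p - 1) * real n ^ p)"
      unfolding N_def by (rule WU_bound[OF n0])
    fix f assume "f \<in> F"
    then show "integral\<^sup>L M (\<lambda>\<omega>. (\<Prod>l<p. uu n (X (f l) \<omega>)) * Max ((\<lambda>j. (X j \<omega>)^2) ` (N - f ` {..<p})))
      \<le> integral\<^sup>L M (\<lambda>\<omega>. \<Prod>l<p. uu n (X (f l) \<omega>)) * integral\<^sup>L M (\<lambda>\<omega>. (maxX X n \<omega>)^2)"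
      using Mc_facts(1)[OF np, of f] unfolding F_def N_def by simp
  qed simp
  also have "(\<Sum>f\<in>F. integral\<^sup>L M (\<lambda>\<omega>. \<Prod>l<p. uu n (X (f l) \<omega>)) * integral\<^sup>L M (\<lambda>\<omega>. (maxX X n \<omega>)^2))
      = integral\<^sup>L M (\<lambda>\<omega>. (\<Sum>i\<in>N. uu n (X i \<omega>)) ^ p) * integral\<^sup>L M (\<lambda>\<omega>. (maxX X n \<omega>)^2)"
  proof -
    have "(\<Sum>f\<in>F. integral\<^sup>L M (\<lambda>\<omega>. \<Prod>l<p. uu n (X (f l) \<omega>))) = integral\<^sup>L M (\<lambda>\<omega>. \<Sum>f\<in>F. \<Prod>l<p. uu n (X (f l) \<omega>))"
      by (rule Bochner_Integration.integral_sum[symmetric, OF ip])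
    also have "\<dots> = integral\<^sup>L M (\<lambda>\<omega>. (\<Sum>i\<in>N. uu n (X i \<omega>)) ^ p)"
      unfolding F_def N_def by (subst U_pow_expand) auto
    finally have eq: "(\<Sum>f\<in>F. integral\<^sup>L M (\<lambda>\<omega>. \<Prod>l<p. uu n (X (f l) \<omega>))) = integral\<^sup>L M (\<lambda>\<omega>. (\<Sum>i\<in>N. uu n (X i \<omega>)) ^ p)" .
    show ?thesis by (simp only: sum_distrib_right[symmetric] eq)
  qed
  also have "integral\<^sup>L M (\<lambda>\<omega>. (\<Sum>i\<in>N. uu n (X i \<omega>)) ^ p) * integral\<^sup>L M (\<lambda>\<omega>. (maxX X n \<omega>)^2)
      \<le> Kc mm p * real n ^ p * integral\<^sup>L M (\<lambda>\<omega>. (maxX X n \<omega>)^2)"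
  proof (intro mult_right_mono)
    show "integral\<^sup>L M (\<lambda>\<omega>. (\<Sum>i\<in>N. uu n (X i \<omega>)) ^ p) \<le> Kc mm p * real n ^ p"
      using U_mom[OF n0, of p] unfolding N_def by auto
    show "0 \<le> integral\<^sup>L M (\<lambda>\<omega>. (maxX X n \<omega>)^2)" by (intro integral_nonneg_AE AE_I2) simp
  qed
  finally show "integral\<^sup>L M (Zb n) \<le> real p * (2 ^ (p - 1) * (real n * integral\<^sup>L M (\<lambda>\<omega>. uu n (X 1 \<omega>) ^ (p + 1)) + mm * Kc mm (p - 1) * real n ^ p))
        + Kc mm p * real n ^ p * integral\<^sup>L M (\<lambda>\<omega>. (maxX X n \<omega>)^2)" by simp
qed


lemma R_pw: assumes np: "p < n" and w: "\<omega> \<in> space M" and t: "0 \<le> t"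
  shows "Rstat p X n \<omega> \<le> 3 ^ (p + 1) / real n ^ (p + 1) * Zb n \<omega>
     + real n ^ (p + 1) * exp (t * real n / 2) * exp (- t * psum X n \<omega>)"
proof -
  define S where "S = psum X n \<omega>"
  define Q where "Q = (\<Sum>i=1..n. (X i \<omega>)^2)"
  define Mx where "Mx = maxX X n \<omega>"
  define U where "U = (\<Sum>i\<in>{1..n}. uu n (X i \<omega>))"
  have n0: "0 < n" using np by simp
  have x0: "\<And>i. 0 < X i \<omega>" using pos[OF w] .
  have S0: "0 < S" unfolding S_def psum_def using x0 n0 by (intro sum_pos) auto
  have M0: "0 \<le> Mx" and MS: "Mx \<le> S" and XM: "\<And>i. i \<in> {1..n} \<Longrightarrow> X i \<omega> \<le> Mx"
    using maxX_bounds[OF n0 w] unfolding Mx_def S_def by auto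
  have XS: "X i \<omega> \<le> S" if "i \<in> {1..n}" for i using XM[OF that] MS by simp
  have Q0: "0 \<le> Q" unfolding Q_def by (auto intro: sum_nonneg)
  have QMS: "Q \<le> Mx * S"
  proof -
    have "Q \<le> (\<Sum>i=1..n. Mx * X i \<omega>)" unfolding Q_def
      using XM x0 by (intro sum_mono) (auto simp: power2_eq_square intro: mult_right_mono less_imp_le)
    then show ?thesis unfolding S_def psum_def by (simp add: sum_distrib_left)
  qed
  have Req: "Rstat p X n \<omega> = (Q / S) ^ p * (Mx^2 / S)"
    unfolding Rstat_def Tstat_def Q_def S_def Mx_def by simp
  have Z0: "0 \<le> Zb n \<omega>" by (rule Zb_nonneg[OF w np])
  have E0: "0 \<le> real n ^ (p + 1) * exp (t * real n / 2) * exp (- t * S)" by simp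
  show ?thesis
  proof (cases "S < real n / 2")
    case True
    have "Q / S \<le> S" using QMS MS S0 M0 by (simp add: divide_le_eq) (smt (verit) mult_right_mono)
    then have a: "(Q / S) ^ p \<le> S ^ p" using Q0 S0 by (intro power_mono) auto
    have "Mx^2 \<le> S * S" using M0 MS by (simp add: power2_eq_square mult_mono)
    then have b: "Mx^2 / S \<le> S" using S0 by (simp add: divide_le_eq)
    have "Rstat p X n \<omega> \<le> S ^ p * S" unfolding Req
      using a b Q0 S0 by (intro mult_mono) auto
    also have "\<dots> = S ^ (p + 1)" by simp
    also have "\<dots> \<le> real n ^ (p + 1)" using True S0 by (intro power_mono) auto
    also have "\<dots> \<le> real n ^ (p + 1) * exp (t * real n / 2) * exp (- t * S)"
    proof -
      have "exp (t * real n / 2) * exp (- t * S) = exp (t * (real n / 2 - S))" by (simp add: exp_add[symmetric] algebra_simps)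
      also have "\<dots> \<ge> 1" using True t by simp
      finally have "1 \<le> exp (t * real n / 2) * exp (- t * S)" .
      then have "real n ^ (p + 1) * 1 \<le> real n ^ (p + 1) * (exp (t * real n / 2) * exp (- t * S))"
        by (intro mult_left_mono) auto
      then show ?thesis by (simp add: mult.assoc)
    qed
    finally show ?thesis using Z0 n0 unfolding S_def by (smt (verit) divide_nonneg_nonneg mult_nonneg_nonneg zero_le_power of_nat_0_le_iff)
  next
    case False
    define a where "a = 1 + S / real n"
    define c where "c = real n / 3"
    have a0: "0 < a" unfolding a_def using S0 n0 by (simp add: add_pos_pos)
    have c0: "0 < c" unfolding c_def using n0 by simp
    have ca: "c * a \<le> S" unfolding a_def c_def using False n0 by (simp add: field_simps)
    have QU: "Q \<le> U * a"
    proof -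
      have "Q = (\<Sum>i=1..n. uu n (X i \<omega>) * (1 + X i \<omega> / real n))"
        unfolding Q_def uu_def
      proof (intro sum.cong refl)
        fix i
        have "0 < 1 + X i \<omega> / real n" using x0[of i] n0 by (simp add: add_pos_pos)
        then show "(X i \<omega>)^2 = (X i \<omega>)^2 / (1 + X i \<omega> / real n) * (1 + X i \<omega> / real n)" by simp
      qed
      also have "\<dots> \<le> (\<Sum>i=1..n. uu n (X i \<omega>) * a)" unfolding a_def
        using XS x0 n0 uu_nonneg[of "X _ \<omega>" n]
        by (intro sum_mono mult_left_mono) (auto simp: divide_right_mono less_imp_le)
      finally show ?thesis unfolding U_def by (simp add: sum_distrib_right)
    qed
    have U0: "0 \<le> U" unfolding U_def by (intro sum_nonneg uu_nonneg) (use x0 in \<open>auto intro: less_imp_le\<close>)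
    have "Q / S \<le> U * a / (c * a)"
      using QU ca a0 c0 S0 Q0 U0 by (intro frac_le) auto
    also have "\<dots> = U / c" using a0 by simp
    finally have a: "(Q / S) ^ p \<le> (U / c) ^ p" using Q0 S0 by (intro power_mono) auto
    have b: "Mx^2 / S \<le> Mx^2 / (c * a)" using ca a0 c0 S0 by (intro divide_left_mono) auto
    have "Rstat p X n \<omega> \<le> (U / c) ^ p * (Mx^2 / (c * a))" unfolding Req
      using a b Q0 S0 U0 c0 by (intro mult_mono) auto
    also have "\<dots> = 3 ^ (p + 1) / real n ^ (p + 1) * (U ^ p * Mx^2 / a)"
      unfolding c_def using a0 n0 by (simp add: field_simps power_divide)
    also have "\<dots> \<le> 3 ^ (p + 1) / real n ^ (p + 1) * Zb n \<omega>"
      using tuple_pw[OF np w] unfolding Zb_def U_def Mx_def a_def S_def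
      by (intro mult_left_mono) auto
    finally show ?thesis using E0 unfolding S_def by linarith
  qed
qed


lemma expX_int: assumes "0 \<le> t" shows "integrable M (\<lambda>\<omega>. exp (- t * X i \<omega>))"
proof (rule Bochner_Integration.integrable_bound)
  show "integrable M (\<lambda>\<omega>. 1::real)" by simp
  show "(\<lambda>\<omega>. exp (- t * X i \<omega>)) \<in> borel_measurable M" by measurable
  show "AE x in M. norm (exp (- t * X i x)) \<le> norm (1::real)"
  proof (intro AE_I2)
    fix x assume "x \<in> space M"
    then have "0 \<le> t * X i x" using Xpos[of x i] assms by simp
    then show "norm (exp (- t * X i x)) \<le> norm (1::real)" by simp
  qed
qed

lemma phi_bound: assumes "0 \<le> t"
  shows "integral\<^sup>L M (\<lambda>\<omega>. exp (- t * X i \<omega>)) \<le> 1 - t + t^2 * mm / 2"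
    "0 \<le> integral\<^sup>L M (\<lambda>\<omega>. exp (- t * X i \<omega>))"
proof -
  have i1: "integrable M (X i)" using mom_int[of 1 i] by simp
  have i2: "integrable M (\<lambda>\<omega>. X i \<omega> ^ 2)" using mom_int[of 2 i] by simp
  have m1: "integral\<^sup>L M (X i) = 1" using same_integral[of "\<lambda>y. y" i] mean by simp
  have "integral\<^sup>L M (\<lambda>\<omega>. exp (- t * X i \<omega>)) \<le> integral\<^sup>L M (\<lambda>\<omega>. 1 - t * X i \<omega> + t^2 / 2 * X i \<omega> ^ 2)"
  proof (rule integral_mono[OF expX_int[OF assms]])
    show "integrable M (\<lambda>\<omega>. 1 - t * X i \<omega> + t^2 / 2 * X i \<omega> ^ 2)" using i1 i2 by auto
    fix x assume "x \<in> space M"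
    then have "0 \<le> t * X i x" using Xpos assms by auto
    from exp_neg_le[OF this] show "exp (- t * X i x) \<le> 1 - t * X i x + t^2 / 2 * X i x ^ 2"
      by (simp add: power_mult_distrib)
  qed
  also have "\<dots> = 1 - t * integral\<^sup>L M (X i) + t^2 / 2 * integral\<^sup>L M (\<lambda>\<omega>. X i \<omega> ^ 2)"
    using i1 i2 by (simp add: prob_space)
  also have "\<dots> \<le> 1 - t + t^2 * mm / 2"
    using mom_bound[of 2 i] m1 by (simp add: mult_left_mono divide_right_mono)
  finally show "integral\<^sup>L M (\<lambda>\<omega>. exp (- t * X i \<omega>)) \<le> 1 - t + t^2 * mm / 2" .
  show "0 \<le> integral\<^sup>L M (\<lambda>\<omega>. exp (- t * X i \<omega>))" by (intro integral_nonneg_AE AE_I2) simp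
qed

lemma expS: assumes "0 \<le> t"
  shows "integral\<^sup>L M (\<lambda>\<omega>. exp (- t * psum X n \<omega>)) = (\<Prod>i\<in>{1..n}. integral\<^sup>L M (\<lambda>\<omega>. exp (- t * X i \<omega>)))"
    "integrable M (\<lambda>\<omega>. exp (- t * psum X n \<omega>))"
proof -
  have e: "exp (- t * psum X n \<omega>) = (\<Prod>i\<in>{1..n}. exp (- t * X i \<omega>))" for \<omega>
    unfolding psum_def by (simp add: sum_distrib_left exp_sum)
  have ind: "indep_vars (\<lambda>_. borel) (\<lambda>i \<omega>. exp (- t * X i \<omega>)) {1..n}"
    by (rule indep_vars_compose2[OF indep_vars_subset[OF indep]]) auto
  show "integral\<^sup>L M (\<lambda>\<omega>. exp (- t * psum X n \<omega>)) = (\<Prod>i\<in>{1..n}. integral\<^sup>L M (\<lambda>\<omega>. exp (- t * X i \<omega>)))"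
    unfolding e by (rule indep_vars_lebesgue_integral[OF _ ind expX_int[OF assms]]) auto
  show "integrable M (\<lambda>\<omega>. exp (- t * psum X n \<omega>))"
    unfolding e by (rule indep_vars_integrable[OF _ ind expX_int[OF assms]]) auto
qed

lemma chernoff: assumes "0 < n"
  shows "real n ^ (p + 1) * exp (1 / (2 * mm) * real n / 2) * integral\<^sup>L M (\<lambda>\<omega>. exp (- (1 / (2 * mm)) * psum X n \<omega>))
    \<le> (real (p + 1) * (16 * mm)) ^ (p + 1) * exp (- real n / (16 * mm))"
proof -
  define t where "t = 1 / (2 * mm)"
  have mm1: "1 \<le> mm" by (rule mm_ge1)
  have t0: "0 \<le> t" unfolding t_def using mm1 by simp
  have "integral\<^sup>L M (\<lambda>\<omega>. exp (- t * psum X n \<omega>)) = (\<Prod>i\<in>{1..n}. integral\<^sup>L M (\<lambda>\<omega>. exp (- t * X i \<omega>)))"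
    by (rule expS(1)[OF t0])
  also have "\<dots> \<le> (\<Prod>i\<in>{1..n}. 1 - t + t^2 * mm / 2)"
    by (intro prod_mono conjI phi_bound t0)
  also have "\<dots> = (1 - t + t^2 * mm / 2) ^ n" by simp
  also have "1 - t + t^2 * mm / 2 = 1 - 3 / (8 * mm)"
    unfolding t_def using mm1 by (simp add: field_simps power2_eq_square)
  also have "(1 - 3 / (8 * mm)) ^ n \<le> exp (- 3 / (8 * mm)) ^ n"
  proof (rule power_mono)
    have "3 / (8 * mm) \<le> 1" using mm1 by (simp add: divide_le_eq)
    then show "0 \<le> 1 - 3 / (8 * mm)" by simp
    show "1 - 3 / (8 * mm) \<le> exp (- 3 / (8 * mm))"
      using exp_ge_add_one_self[of "- 3 / (8 * mm)"] by simp
  qed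
  also have "exp (- 3 / (8 * mm)) ^ n = exp (real n * (- 3 / (8 * mm)))" by (rule exp_of_nat_mult[symmetric])
  also have "real n * (- 3 / (8 * mm)) = - 3 * real n / (8 * mm)" by simp
  finally have E: "integral\<^sup>L M (\<lambda>\<omega>. exp (- t * psum X n \<omega>)) \<le> exp (- 3 * real n / (8 * mm))" .
  have ee: "exp (t * real n / 2) * exp (- 3 * real n / (8 * mm)) = exp (- real n / (8 * mm))"
  proof -
    have "t * real n / 2 + - 3 * real n / (8 * mm) = - real n / (8 * mm)"
      unfolding t_def using mm1 by (simp add: field_simps)
    then show ?thesis by (simp only: exp_add[symmetric])
  qed
  have E2: "real n ^ (p + 1) * exp (t * real n / 2) * integral\<^sup>L M (\<lambda>\<omega>. exp (- t * psum X n \<omega>))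
      \<le> real n ^ (p + 1) * exp (- real n / (8 * mm))"
  proof -
    have "real n ^ (p + 1) * exp (t * real n / 2) * integral\<^sup>L M (\<lambda>\<omega>. exp (- t * psum X n \<omega>))
      \<le> real n ^ (p + 1) * exp (t * real n / 2) * exp (- 3 * real n / (8 * mm))"
      by (intro mult_left_mono E) auto
    also have "\<dots> = real n ^ (p + 1) * exp (- real n / (8 * mm))" using ee by (simp only: mult.assoc)
    finally show ?thesis .
  qed
  have "real n ^ (p + 1) \<le> (real (p + 1) / (1 / (16 * mm))) ^ (p + 1) * exp (1 / (16 * mm) * real n)"
    by (rule pow_le_exp) (use mm1 in auto)
  then have "real n ^ (p + 1) * exp (- real n / (8 * mm)) \<le> (real (p + 1) / (1 / (16 * mm))) ^ (p + 1) * exp (1 / (16 * mm) * real n) * exp (- real n / (8 * mm))"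
    by (intro mult_right_mono) auto
  also have "\<dots> = (real (p + 1) * (16 * mm)) ^ (p + 1) * exp (- real n / (16 * mm))"
  proof -
    have "1 / (16 * mm) * real n + - real n / (8 * mm) = - real n / (16 * mm)"
      using mm1 by (simp add: field_simps)
    then have "exp (1 / (16 * mm) * real n) * exp (- real n / (8 * mm)) = exp (- real n / (16 * mm))"
      by (simp only: exp_add[symmetric])
    moreover have "real (p + 1) / (1 / (16 * mm)) = real (p + 1) * (16 * mm)" by simp
    ultimately show ?thesis by (simp only: mult.assoc)
  qed
  finally have E3: "real n ^ (p + 1) * exp (- real n / (8 * mm)) \<le> (real (p + 1) * (16 * mm)) ^ (p + 1) * exp (- real n / (16 * mm))" .
  from E2 E3 show ?thesis unfolding t_def by linarith
qed


lemma prodX2_int: "integrable M (\<lambda>\<omega>. \<Prod>j<p. X (Suc j) \<omega> ^ 2)"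
proof -
  have ind: "indep_vars (\<lambda>_. borel) (\<lambda>i \<omega>. X i \<omega> ^ 2) (Suc ` {..<p})"
    by (rule indep_vars_compose2[OF indep_vars_subset[OF indep]]) auto
  have "integrable M (\<lambda>\<omega>. \<Prod>i\<in>Suc ` {..<p}. X i \<omega> ^ 2)"
    by (rule indep_vars_integrable[OF _ ind]) (auto intro: mom_int)
  then show ?thesis by (simp add: prod.reindex)
qed

lemma W_meas: "(\<lambda>\<omega>. (\<Prod>j<p. X (Suc j) \<omega> ^ 2) / (psum X p \<omega> / real n + 1) ^ (p + 1)) \<in> borel_measurable M"
  unfolding psum_def by measurable

lemma W_facts: assumes "0 < n"
  shows "integrable M (Wterm p X n (replicate p 1))"
    "integral\<^sup>L M (\<lambda>\<omega>. (\<Prod>j<p. X (Suc j) \<omega> ^ 2) / (psum X p \<omega> + 1) ^ (p + 1)) \<le> integral\<^sup>L M (Wterm p X n (replicate p 1))"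
    "0 < integral\<^sup>L M (\<lambda>\<omega>. (\<Prod>j<p. X (Suc j) \<omega> ^ 2) / (psum X p \<omega> + 1) ^ (p + 1))"
proof -
  have P0: "0 < (\<Prod>j<p. X (Suc j) \<omega> ^ 2)" if "\<omega> \<in> space M" for \<omega>
    by (intro prod_pos zero_less_power pos[OF that])
  have ps0: "0 \<le> psum X p \<omega>" if "\<omega> \<in> space M" for \<omega>
    unfolding psum_def using pos[OF that] by (intro sum_nonneg) (auto intro: less_imp_le)
  have d1: "1 \<le> psum X p \<omega> / real n + 1" if "\<omega> \<in> space M" for \<omega>
    using ps0[OF that] assms by simp
  have le1: "(\<Prod>j<p. X (Suc j) \<omega> ^ 2) / (psum X p \<omega> / real n + 1) ^ (p + 1) \<le> (\<Prod>j<p. X (Suc j) \<omega> ^ 2)"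
    if "\<omega> \<in> space M" for \<omega>
  proof -
    have "1 \<le> (psum X p \<omega> / real n + 1) ^ (p + 1)" using d1[OF that] by (rule one_le_power)
    then show ?thesis using P0[OF that] by (simp add: divide_le_eq mult_le_cancel_left1)
  qed
  have W0: "0 \<le> (\<Prod>j<p. X (Suc j) \<omega> ^ 2) / (psum X p \<omega> / real n + 1) ^ (p + 1)" if "\<omega> \<in> space M" for \<omega>
    using P0[OF that] d1[OF that] by (intro divide_nonneg_nonneg) auto
  show iW: "integrable M (Wterm p X n (replicate p 1))"
    unfolding Wterm_g1[abs_def]
  proof (rule Bochner_Integration.integrable_bound[OF prodX2_int W_meas])
    show "AE x in M. norm ((\<Prod>j<p. X (Suc j) x ^ 2) / (psum X p x / real n + 1) ^ (p + 1)) \<le> norm (\<Prod>j<p. X (Suc j) x ^ 2)"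
    proof (intro AE_I2)
      fix x assume x: "x \<in> space M"
      show "norm ((\<Prod>j<p. X (Suc j) x ^ 2) / (psum X p x / real n + 1) ^ (p + 1)) \<le> norm (\<Prod>j<p. X (Suc j) x ^ 2)"
        using le1[OF x] W0[OF x] P0[OF x] by (simp only: real_norm_def abs_of_nonneg abs_of_pos)
    qed
  qed
  have w0m: "(\<lambda>\<omega>. (\<Prod>j<p. X (Suc j) \<omega> ^ 2) / (psum X p \<omega> + 1) ^ (p + 1)) \<in> borel_measurable M"
    unfolding psum_def by measurable
  have w0pos: "0 < (\<Prod>j<p. X (Suc j) \<omega> ^ 2) / (psum X p \<omega> + 1) ^ (p + 1)" if "\<omega> \<in> space M" for \<omega>
    using P0[OF that] ps0[OF that] by (intro divide_pos_pos) auto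
  have w0le: "(\<Prod>j<p. X (Suc j) \<omega> ^ 2) / (psum X p \<omega> + 1) ^ (p + 1) \<le> (\<Prod>j<p. X (Suc j) \<omega> ^ 2) / (psum X p \<omega> / real n + 1) ^ (p + 1)"
    if "\<omega> \<in> space M" for \<omega>
  proof (rule divide_left_mono)
    have "psum X p \<omega> / real n \<le> psum X p \<omega> / 1" using ps0[OF that] assms
      by (intro divide_left_mono) auto
    then have "psum X p \<omega> / real n \<le> psum X p \<omega>" by simp
    then show "(psum X p \<omega> / real n + 1) ^ (p + 1) \<le> (psum X p \<omega> + 1) ^ (p + 1)"
      using d1[OF that] by (intro power_mono) auto
    show "0 \<le> (\<Prod>j<p. X (Suc j) \<omega> ^ 2)" using P0[OF that] by simp
    show "0 < (psum X p \<omega> + 1) ^ (p + 1) * (psum X p \<omega> / real n + 1) ^ (p + 1)"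
    proof (intro mult_pos_pos zero_less_power)
      show "0 < psum X p \<omega> + 1" using ps0[OF that] by simp
      show "0 < psum X p \<omega> / real n + 1" using d1[OF that] by simp
    qed
  qed
  have iw0: "integrable M (\<lambda>\<omega>. (\<Prod>j<p. X (Suc j) \<omega> ^ 2) / (psum X p \<omega> + 1) ^ (p + 1))"
  proof (rule Bochner_Integration.integrable_bound[OF prodX2_int w0m])
    show "AE x in M. norm ((\<Prod>j<p. X (Suc j) x ^ 2) / (psum X p x + 1) ^ (p + 1)) \<le> norm (\<Prod>j<p. X (Suc j) x ^ 2)"
    proof (intro AE_I2)
      fix x assume x: "x \<in> space M"
      have "(\<Prod>j<p. X (Suc j) x ^ 2) / (psum X p x + 1) ^ (p + 1) \<le> (\<Prod>j<p. X (Suc j) x ^ 2)"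
        using w0le[OF x] le1[OF x] by linarith
      then show "norm ((\<Prod>j<p. X (Suc j) x ^ 2) / (psum X p x + 1) ^ (p + 1)) \<le> norm (\<Prod>j<p. X (Suc j) x ^ 2)"
        using w0pos[OF x] P0[OF x] by (simp only: real_norm_def abs_of_nonneg abs_of_pos)
    qed
  qed
  show "integral\<^sup>L M (\<lambda>\<omega>. (\<Prod>j<p. X (Suc j) \<omega> ^ 2) / (psum X p \<omega> + 1) ^ (p + 1)) \<le> integral\<^sup>L M (Wterm p X n (replicate p 1))"
    unfolding Wterm_g1[abs_def]
  proof (rule integral_mono[OF iw0])
    show "integrable M (\<lambda>\<omega>. (\<Prod>j<p. X (Suc j) \<omega> ^ 2) / (psum X p \<omega> / real n + 1) ^ (p + 1))"
      using iW unfolding Wterm_g1[abs_def] .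
    fix \<omega> assume "\<omega> \<in> space M"
    then show "(\<Prod>j<p. X (Suc j) \<omega> ^ 2) / (psum X p \<omega> + 1) ^ (p + 1) \<le> (\<Prod>j<p. X (Suc j) \<omega> ^ 2) / (psum X p \<omega> / real n + 1) ^ (p + 1)"
      by (rule w0le)
  qed
  have "integral\<^sup>L M (\<lambda>\<omega>. (\<Prod>j<p. X (Suc j) \<omega> ^ 2) / (psum X p \<omega> + 1) ^ (p + 1)) \<noteq> 0"
  proof
    assume "integral\<^sup>L M (\<lambda>\<omega>. (\<Prod>j<p. X (Suc j) \<omega> ^ 2) / (psum X p \<omega> + 1) ^ (p + 1)) = 0"
    moreover have nn: "AE x in M. 0 \<le> (\<Prod>j<p. X (Suc j) x ^ 2) / (psum X p x + 1) ^ (p + 1)"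
      by (intro AE_I2 less_imp_le w0pos)
    ultimately have "AE x in M. (\<Prod>j<p. X (Suc j) x ^ 2) / (psum X p x + 1) ^ (p + 1) = 0"
      using iffD1[OF integral_nonneg_eq_0_iff_AE[OF iw0 nn]] by blast
    moreover have "AE x in M. x \<in> space M" by (rule AE_space)
    ultimately have "AE x in M. False"
    proof eventually_elim
      case (elim x)
      then show False using w0pos[OF elim(2)] elim(1) by linarith
    qed
    then show False using AE_False by simp
  qed
  moreover have "0 \<le> integral\<^sup>L M (\<lambda>\<omega>. (\<Prod>j<p. X (Suc j) \<omega> ^ 2) / (psum X p \<omega> + 1) ^ (p + 1))"
    using w0pos by (intro integral_nonneg_AE AE_I2 less_imp_le) auto
  ultimately show "0 < integral\<^sup>L M (\<lambda>\<omega>. (\<Prod>j<p. X (Suc j) \<omega> ^ 2) / (psum X p \<omega> + 1) ^ (p + 1))" by simp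
qed

lemma EM2_ge1: assumes "0 < n" shows "1 \<le> integral\<^sup>L M (\<lambda>\<omega>. (maxX X n \<omega>)^2)"
proof -
  have i1: "integrable M (X 1)" using mom_int[of 1 1] by simp
  have m1: "integral\<^sup>L M (X 1) = 1" using same_integral[of "\<lambda>y. y" 1] mean by simp
  have "integral\<^sup>L M (\<lambda>\<omega>. 2 * X 1 \<omega> - 1) \<le> integral\<^sup>L M (\<lambda>\<omega>. (maxX X n \<omega>)^2)"
  proof (rule integral_mono)
    show "integrable M (\<lambda>\<omega>. 2 * X 1 \<omega> - 1)" using i1 by auto
    show "integrable M (\<lambda>\<omega>. (maxX X n \<omega>)^2)" by (rule M2_int[OF assms])
    fix x assume x: "x \<in> space M"
    have "X 1 x \<le> maxX X n x" using maxX_bounds(3)[OF assms x, of 1] assms by auto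
    then have "(X 1 x)^2 \<le> (maxX X n x)^2" using Xpos[OF x, of 1] by (intro power_mono) auto
    moreover have "2 * X 1 x - 1 \<le> (X 1 x)^2"
    proof -
      have "0 \<le> (X 1 x - 1)^2" by simp
      then show ?thesis by (simp add: power2_diff)
    qed
    ultimately show "2 * X 1 x - 1 \<le> (maxX X n x)^2" by simp
  qed
  also have "integral\<^sup>L M (\<lambda>\<omega>. 2 * X 1 \<omega> - 1) = 1" using i1 m1 by (simp add: prob_space)
  finally show ?thesis by simp
qed


lemma main:
  "\<exists>c > 0. \<forall>n \<ge> 2 * p.
     c * integral\<^sup>L M (Rstat p X n)
       \<le> exp (- c * real n)
         + Max {integral\<^sup>L M (\<lambda>\<omega>. Wterm p X n \<gamma> \<omega> * (X k \<omega>)^2) / real n ^ (p - r + 1)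
                 | r k \<gamma>. 1 \<le> r \<and> r \<le> p \<and> 1 \<le> k \<and> k \<le> r \<and> \<gamma> \<in> compositions p r}
         + Max {integral\<^sup>L M (Wterm p X n \<gamma>) / real n ^ (p - r + 1)
                 | r \<gamma>. 1 \<le> r \<and> r \<le> p \<and> \<gamma> \<in> compositions p r}
           * integral\<^sup>L M (\<lambda>\<omega>. (maxX X n \<omega>)^2)"
proof -
  define c0 where "c0 = integral\<^sup>L M (\<lambda>\<omega>. (\<Prod>j<p. X (Suc j) \<omega> ^ 2) / (psum X p \<omega> + 1) ^ (p + 1))"
  define C1 :: real where "C1 = 3 ^ (p + 1) * real p * 2 ^ (p - 1)"
  define C2 :: real where "C2 = 3 ^ (p + 1) * (real p * 2 ^ (p - 1) * mm * Kc mm (p - 1) + Kc mm p)"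
  define Ce :: real where "Ce = (real (p + 1) * (16 * mm)) ^ (p + 1)"
  define \<kappa> :: real where "\<kappa> = 1 / (16 * mm)"
  define c where "c = min (min (1 / C1) (c0 / C2)) (min (1 / Ce) \<kappa>)"
  have mm1: "1 \<le> mm" by (rule mm_ge1)
  have c0p: "0 < c0" unfolding c0_def using W_facts(3)[of 1] by simp
  have C1p: "0 < C1" unfolding C1_def using p2 by simp
  have C2p: "0 < C2" unfolding C2_def using p2 mm1 Kc_pos[of mm "p - 1"] Kc_pos[of mm p]
    by (intro mult_pos_pos add_pos_nonneg) auto
  have Cep: "0 < Ce" unfolding Ce_def using mm1 by simp
  have kp: "0 < \<kappa>" unfolding \<kappa>_def using mm1 by simp
  have cp: "0 < c" unfolding c_def using C1p C2p Cep kp c0p by simp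
  have cC1: "c * C1 \<le> 1" unfolding c_def using C1p
    by (metis min.cobounded1 min.coboundedI1 mult_right_mono nonzero_eq_divide_eq less_imp_le order.strict_iff_not divide_le_eq)
  have cC2: "c * C2 \<le> c0" unfolding c_def using C2p
    by (metis min.cobounded1 min.cobounded2 min.coboundedI1 pos_le_divide_eq)
  have cCe: "c * Ce \<le> 1" unfolding c_def using Cep
    by (metis min.cobounded1 min.coboundedI2 pos_le_divide_eq)
  have ck: "c \<le> \<kappa>" unfolding c_def by simp
  show ?thesis
  proof (intro exI[of _ c] conjI allI impI cp)
    fix n :: nat assume n2: "2 * p \<le> n"
    have np: "p < n" using n2 p2 by simp
    have n0: "0 < n" using np by simp
    define EM2 where "EM2 = integral\<^sup>L M (\<lambda>\<omega>. (maxX X n \<omega>)^2)"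
    define E1 where "E1 = integral\<^sup>L M (\<lambda>\<omega>. uu n (X 1 \<omega>) ^ (p + 1))"
    define A1 where "A1 = E1 / real n ^ p"
    define t where "t = 1 / (2 * mm)"
    have t0: "0 \<le> t" unfolding t_def using mm1 by simp
    have EM1: "1 \<le> EM2" unfolding EM2_def by (rule EM2_ge1[OF n0])
    have E10: "0 \<le> E1" unfolding E1_def
      by (intro integral_nonneg_AE AE_I2 zero_le_power uu_nonneg Xpos)
    have A10: "0 \<le> A1" unfolding A1_def using E10 by simp
    define Bd where "Bd = (\<lambda>\<omega>. 3 ^ (p + 1) / real n ^ (p + 1) * Zb n \<omega>
      + real n ^ (p + 1) * exp (t * real n / 2) * exp (- t * psum X n \<omega>))"
    have iBd: "integrable M Bd" unfolding Bd_def
      using Zb_bound(1)[OF np] expS(2)[OF t0, of n]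
      by (intro Bochner_Integration.integrable_add integrable_mult_right)
    have Bd0: "0 \<le> Bd \<omega>" if "\<omega> \<in> space M" for \<omega>
      unfolding Bd_def using Zb_nonneg[OF that np] by (intro add_nonneg_nonneg mult_nonneg_nonneg) auto
    have "integral\<^sup>L M (Rstat p X n) \<le> integral\<^sup>L M Bd"
      by (rule integral_mono'[OF iBd _ Bd0]) (unfold Bd_def, rule R_pw[OF np _ t0])
    also have "integral\<^sup>L M Bd = 3 ^ (p + 1) / real n ^ (p + 1) * integral\<^sup>L M (Zb n)
        + real n ^ (p + 1) * exp (t * real n / 2) * integral\<^sup>L M (\<lambda>\<omega>. exp (- t * psum X n \<omega>))"
      unfolding Bd_def using Zb_bound(1)[OF np] expS(2)[OF t0, of n] by simp
    also have "\<dots> \<le> 3 ^ (p + 1) / real n ^ (p + 1) * (real p * (2 ^ (p - 1) * (real n * E1 + mm * Kc mm (p - 1) * real n ^ p))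
        + Kc mm p * real n ^ p * EM2) + Ce * exp (- \<kappa> * real n)"
    proof (rule add_mono)
      show "3 ^ (p + 1) / real n ^ (p + 1) * integral\<^sup>L M (Zb n) \<le> 3 ^ (p + 1) / real n ^ (p + 1) * (real p * (2 ^ (p - 1) * (real n * E1 + mm * Kc mm (p - 1) * real n ^ p))
        + Kc mm p * real n ^ p * EM2)"
        unfolding E1_def EM2_def by (intro mult_left_mono Zb_bound(2)[OF np]) auto
      show "real n ^ (p + 1) * exp (t * real n / 2) * integral\<^sup>L M (\<lambda>\<omega>. exp (- t * psum X n \<omega>)) \<le> Ce * exp (- \<kappa> * real n)"
        using chernoff[OF n0] unfolding t_def Ce_def \<kappa>_def by (simp add: field_simps)
    qed
    also have "3 ^ (p + 1) / real n ^ (p + 1) * (real p * (2 ^ (p - 1) * (real n * E1 + mm * Kc mm (p - 1) * real n ^ p))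
        + Kc mm p * real n ^ p * EM2) = C1 * A1 + 3 ^ (p + 1) * (real p * 2 ^ (p - 1) * mm * Kc mm (p - 1) + Kc mm p * EM2) / real n"
      unfolding C1_def A1_def using n0 by (simp add: field_simps)
    also have "3 ^ (p + 1) * (real p * 2 ^ (p - 1) * mm * Kc mm (p - 1) + Kc mm p * EM2) / real n \<le> C2 * EM2 / real n"
    proof (intro divide_right_mono)
      have "real p * 2 ^ (p - 1) * mm * Kc mm (p - 1) \<le> real p * 2 ^ (p - 1) * mm * Kc mm (p - 1) * EM2"
      proof -
        have K: "0 \<le> real p * 2 ^ (p - 1) * mm * Kc mm (p - 1)"
          using mm1 Kc_nonneg[of mm "p - 1"] by simp
        show ?thesis using mult_left_mono[OF EM1 K] by simp
      qed
      then have "3 ^ (p + 1) * (real p * 2 ^ (p - 1) * mm * Kc mm (p - 1) + Kc mm p * EM2)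
          \<le> 3 ^ (p + 1) * (real p * 2 ^ (p - 1) * mm * Kc mm (p - 1) * EM2 + Kc mm p * EM2)"
        by (intro mult_left_mono add_right_mono) auto
      also have "\<dots> = C2 * EM2" unfolding C2_def by (simp add: algebra_simps)
      finally show "3 ^ (p + 1) * (real p * 2 ^ (p - 1) * mm * Kc mm (p - 1) + Kc mm p * EM2) \<le> C2 * EM2" .
    qed simp
    finally have ER: "integral\<^sup>L M (Rstat p X n) \<le> C1 * A1 + C2 * EM2 / real n + Ce * exp (- \<kappa> * real n)"
      by simp
    define SA where "SA = {integral\<^sup>L M (\<lambda>\<omega>. Wterm p X n \<gamma> \<omega> * (X k \<omega>)^2) / real n ^ (p - r + 1)
                 | r k \<gamma>. 1 \<le> r \<and> r \<le> p \<and> 1 \<le> k \<and> k \<le> r \<and> \<gamma> \<in> compositions p r}"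
    define SB where "SB = {integral\<^sup>L M (Wterm p X n \<gamma>) / real n ^ (p - r + 1)
                 | r \<gamma>. 1 \<le> r \<and> r \<le> p \<and> \<gamma> \<in> compositions p r}"
    have "A1 \<in> SA"
    proof -
      have "A1 = integral\<^sup>L M (\<lambda>\<omega>. Wterm p X n [p] \<omega> * (X 1 \<omega>)^2) / real n ^ (p - 1 + 1)"
      proof -
        have e: "(\<lambda>\<omega>. Wterm p X n [p] \<omega> * (X 1 \<omega>)^2) = (\<lambda>\<omega>. uu n (X 1 \<omega>) ^ (p + 1))"
          by (rule ext) (rule Wterm_p[OF n0])
        have "p - 1 + 1 = p" using p2 by simp
        then show ?thesis unfolding A1_def E1_def e by simp
      qed
      moreover have "[p] \<in> compositions p 1" unfolding compositions_def using p2 by simp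
      ultimately show ?thesis unfolding SA_def using p2
        by (intro CollectI exI[of _ 1] exI[of _ "[p]"]) auto
    qed
    then have A1SA: "A1 \<le> Max SA" unfolding SA_def by (intro Max_ge finite_setA) (simp add: SA_def)
    have "integral\<^sup>L M (Wterm p X n (replicate p 1)) / real n \<in> SB"
    proof -
      have "replicate p 1 \<in> compositions p p" unfolding compositions_def by (simp add: sum_list_replicate)
      then show ?thesis unfolding SB_def using p2
        by (intro CollectI exI[of _ p] exI[of _ "replicate p 1"]) auto
    qed
    then have BSB: "integral\<^sup>L M (Wterm p X n (replicate p 1)) / real n \<le> Max SB"
      unfolding SB_def by (intro Max_ge finite_setB) (simp add: SB_def)
    have c0B: "c0 / real n \<le> Max SB"
      using W_facts(2)[OF n0] BSB n0 unfolding c0_def by (smt (verit) divide_right_mono of_nat_0_le_iff)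
    have "c * integral\<^sup>L M (Rstat p X n) \<le> c * (C1 * A1 + C2 * EM2 / real n + Ce * exp (- \<kappa> * real n))"
      using ER cp by (intro mult_left_mono) auto
    also have "\<dots> = (c * C1) * A1 + (c * C2) * (EM2 / real n) + (c * Ce) * exp (- \<kappa> * real n)"
      by (simp add: algebra_simps)
    also have "\<dots> \<le> 1 * A1 + c0 * (EM2 / real n) + 1 * exp (- \<kappa> * real n)"
      using cC1 cC2 cCe A10 EM1 n0 by (intro add_mono mult_right_mono) auto
    also have "\<dots> \<le> Max SA + Max SB * EM2 + exp (- c * real n)"
    proof -
      have "c0 * (EM2 / real n) = (c0 / real n) * EM2" by simp
      also have "\<dots> \<le> Max SB * EM2" using c0B EM1 by (intro mult_right_mono) auto
      finally have 1: "c0 * (EM2 / real n) \<le> Max SB * EM2" .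
      have 2: "exp (- \<kappa> * real n) \<le> exp (- c * real n)" using ck by (simp add: mult_right_mono)
      show ?thesis using A1SA 1 2 by linarith
    qed
    finally show "c * integral\<^sup>L M (Rstat p X n) \<le> exp (- c * real n) + Max SA + Max SB * integral\<^sup>L M (\<lambda>\<omega>. (maxX X n \<omega>)^2)"
      unfolding EM2_def by simp
  qed
qed

end

theorem lemma7:
  fixes M :: "'a measure" and X :: "nat \<Rightarrow> 'a \<Rightarrow> real" and p :: nat
  assumes "prob_space M"
    and "prob_space.indep_vars M (\<lambda>_. borel) X UNIV"
    and "\<And>i. distr M borel (X i) = distr M borel (X 0)"
    and "\<And>i \<omega>. \<omega> \<in> space M \<Longrightarrow> X i \<omega> > 0"
    and "integral\<^sup>L M (X 0) = 1"
    and "p \<ge> 2"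
    and "integrable M (\<lambda>\<omega>. (X 0 \<omega>) ^ (p + 2))"
  shows "\<exists>c > 0. \<forall>n \<ge> 2 * p.
     c * integral\<^sup>L M (Rstat p X n)
       \<le> exp (- c * real n)
         + Max {integral\<^sup>L M (\<lambda>\<omega>. Wterm p X n \<gamma> \<omega> * (X k \<omega>)^2) / real n ^ (p - r + 1)
                 | r k \<gamma>. 1 \<le> r \<and> r \<le> p \<and> 1 \<le> k \<and> k \<le> r \<and> \<gamma> \<in> compositions p r}
         + Max {integral\<^sup>L M (Wterm p X n \<gamma>) / real n ^ (p - r + 1)
                 | r \<gamma>. 1 \<le> r \<and> r \<le> p \<and> \<gamma> \<in> compositions p r}
           * integral\<^sup>L M (\<lambda>\<omega>. (maxX X n \<omega>)^2)"
proof -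
  interpret L7 M X p
    using assms unfolding L7_def L7_axioms_def by auto
  show ?thesis by (rule main)
qed

end
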